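(* Let $k$ be a commutative ring and $H$ a $k$-bialgebra which is finitely generated projective as a $k$-module. Then $H$ is an FH-algebra if and only if the dual $H^*=\mathrm{Hom}_k(H,k)$ is an FH-algebra.
   Context: An FH-algebra over $k$ is a $k$-bialgebra $H$ which is a Frobenius algebra ($H$ finitely generated projective over $k$, with $f\in\mathrm{Hom}_k(H,k)$ and finitely many $x_i,y_i\in H$ such that $\sum_ix_if(y_ia)=a=\sum_if(ax_i)y_i$ for all $a$) whose Frobenius homomorphism $f$ can be chosen to be a right integral in $H^*$, i.e. $\sum f(a_1)a_2=f(a)1$ for all $a\in H$. $H^*$ is a bialgebra with convolution product $(gh)(x)=\sum g(x_1)h(x_2)$ and coproduct dual to the multiplication of $H$; $H^{**}$ is identified with $H$. *)

theory Defs
  imports Main "HOL-Library.Function_Algebras"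
begin

text \<open>
  Modules are represented by a carrier set S inside an abelian group type 'a together
  with a scalar multiplication sc over a commutative ring 'k.  Elements of the n-fold
  tensor power of S are represented by lists of simple tensors (each simple tensor is a
  list of n factors; coefficients are absorbed into the factors), and equality in the
  tensor power is the genuine one: the formal difference lies in the submodule of the free
  k-module on n-tuples generated by the multilinearity relations.
\<close>

definition module_on :: "('k::comm_ring_1 \<Rightarrow> 'a::ab_group_add \<Rightarrow> 'a) \<Rightarrow> 'a set \<Rightarrow> bool" where
  "module_on sc S \<longleftrightarrow> 0 \<in> S \<and> (\<forall>x\<in>S. \<forall>y\<in>S. x + y \<in> S) \<and> (\<forall>x\<in>S. - x \<in> S)
     \<and> (\<forall>r. \<forall>x\<in>S. sc r x \<in> S)
     \<and> (\<forall>r. \<forall>x\<in>S. \<forall>y\<in>S. sc r (x + y) = sc r x + sc r y)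
     \<and> (\<forall>r s. \<forall>x\<in>S. sc (r + s) x = sc r x + sc s x)
     \<and> (\<forall>r s. \<forall>x\<in>S. sc r (sc s x) = sc (r * s) x)
     \<and> (\<forall>x\<in>S. sc 1 x = x)"

definition lin_on :: "('k::comm_ring_1 \<Rightarrow> 'a::ab_group_add \<Rightarrow> 'a) \<Rightarrow> 'a set
    \<Rightarrow> ('k \<Rightarrow> 'b::ab_group_add \<Rightarrow> 'b) \<Rightarrow> ('a \<Rightarrow> 'b) \<Rightarrow> bool" where
  "lin_on sa S sb f \<longleftrightarrow> (\<forall>x\<in>S. \<forall>y\<in>S. f (x + y) = f x + f y) \<and> (\<forall>r. \<forall>x\<in>S. f (sa r x) = sb r (f x))"

definition kn :: "nat \<Rightarrow> (nat \<Rightarrow> 'k::comm_ring_1) set" where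
  "kn n = {v. \<forall>j\<ge>n. v j = 0}"

definition kn_scale :: "'k::comm_ring_1 \<Rightarrow> (nat \<Rightarrow> 'k) \<Rightarrow> (nat \<Rightarrow> 'k)" where
  "kn_scale r v = (\<lambda>j. r * v j)"

text \<open>Finitely generated projective: a direct summand of a finite free module k^n.\<close>
definition fin_gen_proj :: "('k::comm_ring_1 \<Rightarrow> 'a::ab_group_add \<Rightarrow> 'a) \<Rightarrow> 'a set \<Rightarrow> bool" where
  "fin_gen_proj sc S \<longleftrightarrow> (\<exists>n (p :: (nat \<Rightarrow> 'k) \<Rightarrow> 'a) i.
      lin_on kn_scale (kn n) sc p \<and> p ` kn n \<subseteq> S \<and>
      lin_on sc S kn_scale i \<and> i ` S \<subseteq> kn n \<and> (\<forall>a\<in>S. p (i a) = a))"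

definition delta :: "'a list \<Rightarrow> 'a list \<Rightarrow> 'k::comm_ring_1" where
  "delta w = (\<lambda>v. if v = w then 1 else 0)"

inductive_set tensor_rel :: "('k::comm_ring_1 \<Rightarrow> 'a::ab_group_add \<Rightarrow> 'a) \<Rightarrow> 'a set \<Rightarrow> nat
    \<Rightarrow> ('a list \<Rightarrow> 'k) set" for sc S n where
  zero: "(\<lambda>v. 0) \<in> tensor_rel sc S n"
| add: "p \<in> tensor_rel sc S n \<Longrightarrow> q \<in> tensor_rel sc S n \<Longrightarrow> (\<lambda>v. p v + q v) \<in> tensor_rel sc S n"
| smult: "p \<in> tensor_rel sc S n \<Longrightarrow> (\<lambda>v. r * p v) \<in> tensor_rel sc S n"
| additive: "length us + Suc (length vs) = n \<Longrightarrow> set us \<subseteq> S \<Longrightarrow> set vs \<subseteq> S \<Longrightarrow> x \<in> S \<Longrightarrow> y \<in> S \<Longrightarrow>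
     (\<lambda>v. delta (us @ (x + y) # vs) v - delta (us @ x # vs) v - delta (us @ y # vs) v) \<in> tensor_rel sc S n"
| homog: "length us + Suc (length vs) = n \<Longrightarrow> set us \<subseteq> S \<Longrightarrow> set vs \<subseteq> S \<Longrightarrow> x \<in> S \<Longrightarrow>
     (\<lambda>v. delta (us @ sc r x # vs) v - r * delta (us @ x # vs) v) \<in> tensor_rel sc S n"

definition tensor_eq :: "('k::comm_ring_1 \<Rightarrow> 'a::ab_group_add \<Rightarrow> 'a) \<Rightarrow> 'a set \<Rightarrow> nat
    \<Rightarrow> 'a list list \<Rightarrow> 'a list list \<Rightarrow> bool" where
  "tensor_eq sc S n xs ys \<longleftrightarrow> (\<forall>w \<in> set xs \<union> set ys. length w = n \<and> set w \<subseteq> S) \<and>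
     (\<lambda>v. (of_nat (count_list xs v) :: 'k) - of_nat (count_list ys v)) \<in> tensor_rel sc S n"

definition tens2 :: "('a \<times> 'a) list \<Rightarrow> 'a list list" where
  "tens2 L = map (\<lambda>(x, y). [x, y]) L"

definition bialgebra :: "('k::comm_ring_1 \<Rightarrow> 'a::ab_group_add \<Rightarrow> 'a) \<Rightarrow> 'a set
    \<Rightarrow> ('a \<Rightarrow> 'a \<Rightarrow> 'a) \<Rightarrow> 'a \<Rightarrow> ('a \<Rightarrow> ('a \<times> 'a) list) \<Rightarrow> ('a \<Rightarrow> 'k) \<Rightarrow> bool" where
  "bialgebra sc S mult one comult counit \<longleftrightarrow>
     module_on sc S \<and>
     \<comment> \<open>algebra\<close>
     (\<forall>a\<in>S. \<forall>b\<in>S. mult a b \<in> S) \<and> one \<in> S \<and>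
     (\<forall>a\<in>S. lin_on sc S sc (mult a)) \<and> (\<forall>b\<in>S. lin_on sc S sc (\<lambda>a. mult a b)) \<and>
     (\<forall>a\<in>S. \<forall>b\<in>S. \<forall>c\<in>S. mult (mult a b) c = mult a (mult b c)) \<and>
     (\<forall>a\<in>S. mult one a = a \<and> mult a one = a) \<and>
     \<comment> \<open>coalgebra\<close>
     (\<forall>a\<in>S. \<forall>(x, y) \<in> set (comult a). x \<in> S \<and> y \<in> S) \<and>
     (\<forall>a\<in>S. \<forall>b\<in>S. tensor_eq sc S 2 (tens2 (comult (a + b))) (tens2 (comult a @ comult b))) \<and>
     (\<forall>r. \<forall>a\<in>S. tensor_eq sc S 2 (tens2 (comult (sc r a)))
                   (map (\<lambda>(x, y). [sc r x, y]) (comult a))) \<and>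
     (\<forall>a\<in>S. tensor_eq sc S 3
        (concat (map (\<lambda>(a1, a2). map (\<lambda>(b1, b2). [b1, b2, a2]) (comult a1)) (comult a)))
        (concat (map (\<lambda>(a1, a2). map (\<lambda>(c1, c2). [a1, c1, c2]) (comult a2)) (comult a)))) \<and>
     lin_on sc S (\<lambda>r s. r * s) counit \<and>
     (\<forall>a\<in>S. sum_list (map (\<lambda>(x, y). sc (counit x) y) (comult a)) = a) \<and>
     (\<forall>a\<in>S. sum_list (map (\<lambda>(x, y). sc (counit y) x) (comult a)) = a) \<and>
     \<comment> \<open>compatibility: comult and counit are algebra maps\<close>
     (\<forall>a\<in>S. \<forall>b\<in>S. tensor_eq sc S 2 (tens2 (comult (mult a b)))
        (concat (map (\<lambda>(a1, a2). map (\<lambda>(b1, b2). [mult a1 b1, mult a2 b2]) (comult b)) (comult a)))) \<and>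
     tensor_eq sc S 2 (tens2 (comult one)) [[one, one]] \<and>
     (\<forall>a\<in>S. \<forall>b\<in>S. counit (mult a b) = counit a * counit b) \<and> counit one = 1"

text \<open>Frobenius algebra whose Frobenius homomorphism f is a right integral in the dual.\<close>
definition FH_algebra :: "('k::comm_ring_1 \<Rightarrow> 'a::ab_group_add \<Rightarrow> 'a) \<Rightarrow> 'a set
    \<Rightarrow> ('a \<Rightarrow> 'a \<Rightarrow> 'a) \<Rightarrow> 'a \<Rightarrow> ('a \<Rightarrow> ('a \<times> 'a) list) \<Rightarrow> ('a \<Rightarrow> 'k) \<Rightarrow> bool" where
  "FH_algebra sc S mult one comult counit \<longleftrightarrow>
     bialgebra sc S mult one comult counit \<and> fin_gen_proj sc S \<and>
     (\<exists>(f :: 'a \<Rightarrow> 'k) (xys :: ('a \<times> 'a) list).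
        lin_on sc S (\<lambda>r s. r * s) f \<and> (\<forall>(x, y) \<in> set xys. x \<in> S \<and> y \<in> S) \<and>
        (\<forall>a\<in>S. sum_list (map (\<lambda>(x, y). sc (f (mult y a)) x) xys) = a) \<and>
        (\<forall>a\<in>S. sum_list (map (\<lambda>(x, y). sc (f (mult a x)) y) xys) = a) \<and>
        (\<forall>a\<in>S. sum_list (map (\<lambda>(a1, a2). sc (f a1) a2) (comult a)) = sc (f a) one))"

definition dual_scale :: "'k::comm_ring_1 \<Rightarrow> ('a \<Rightarrow> 'k) \<Rightarrow> ('a \<Rightarrow> 'k)" where
  "dual_scale r g = (\<lambda>x. r * g x)"

definition dual_carrier :: "('k::comm_ring_1 \<Rightarrow> 'a::ab_group_add \<Rightarrow> 'a) \<Rightarrow> 'a set \<Rightarrow> ('a \<Rightarrow> 'k) set" where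
  "dual_carrier sc S = {g. lin_on sc S (\<lambda>r s. r * s) g \<and> (\<forall>x. x \<notin> S \<longrightarrow> g x = 0)}"

definition dual_mult :: "'a set \<Rightarrow> ('a \<Rightarrow> ('a \<times> 'a) list) \<Rightarrow> ('a \<Rightarrow> 'k::comm_ring_1) \<Rightarrow> ('a \<Rightarrow> 'k) \<Rightarrow> ('a \<Rightarrow> 'k)" where
  "dual_mult S comult g h = (\<lambda>x. if x \<in> S then sum_list (map (\<lambda>(x1, x2). g x1 * h x2) (comult x)) else 0)"

definition dual_one :: "'a set \<Rightarrow> ('a \<Rightarrow> 'k::comm_ring_1) \<Rightarrow> ('a \<Rightarrow> 'k)" where
  "dual_one S counit = (\<lambda>x. if x \<in> S then counit x else 0)"

text \<open>Coproduct of H* dual to the multiplication of H: a representative in H* (x) H* of the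
  functional (a (x) b) |-> g(ab) (unique in H* (x) H* = (H (x) H)* since H is f.g. projective).\<close>
definition dual_comult :: "('k::comm_ring_1 \<Rightarrow> 'a::ab_group_add \<Rightarrow> 'a) \<Rightarrow> 'a set \<Rightarrow> ('a \<Rightarrow> 'a \<Rightarrow> 'a)
    \<Rightarrow> ('a \<Rightarrow> 'k) \<Rightarrow> (('a \<Rightarrow> 'k) \<times> ('a \<Rightarrow> 'k)) list" where
  "dual_comult sc S mult g = (SOME L. (\<forall>(u, v) \<in> set L. u \<in> dual_carrier sc S \<and> v \<in> dual_carrier sc S) \<and>
      (\<forall>a\<in>S. \<forall>b\<in>S. sum_list (map (\<lambda>(u, v). u a * v b) L) = g (mult a b)))"

definition dual_counit :: "'a \<Rightarrow> ('a \<Rightarrow> 'k) \<Rightarrow> 'k" where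
  "dual_counit one g = g one"

end

theory Submission
  imports Defs
begin


lemma sum_list_map_swap:
  fixes F :: "'a \<Rightarrow> 'b \<Rightarrow> 'c::comm_monoid_add"
  shows "(\<Sum>x\<leftarrow>xs. \<Sum>y\<leftarrow>ys. F x y) = (\<Sum>y\<leftarrow>ys. \<Sum>x\<leftarrow>xs. F x y)"
  by (induction xs) (simp_all add: sum_list_addf)

lemma sum_list_concat_map:
  fixes f :: "'b \<Rightarrow> 'c::monoid_add"
  shows "sum_list (map f (concat (map g xs))) = (\<Sum>x\<leftarrow>xs. sum_list (map f (g x)))"
  by (induction xs) simp_all

lemma sum_list_fun_apply:
  fixes fs :: "('a \<Rightarrow> 'b::monoid_add) list"
  shows "sum_list fs x = (\<Sum>f\<leftarrow>fs. f x)"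
  by (induction fs) simp_all

lemma sum_list_map_zero: "(\<And>x. x \<in> set xs \<Longrightarrow> f x = 0) \<Longrightarrow> sum_list (map f xs) = (0::'b::monoid_add)"
  by (induction xs) simp_all

lemma sum_list_map_cong': "(\<And>x. x \<in> set xs \<Longrightarrow> f x = g x) \<Longrightarrow> sum_list (map f xs) = sum_list (map g xs)"
  by (metis map_eq_conv)

section \<open>Multilinear evaluation of tensor equalities\<close>

definition mlin :: "('k::comm_ring_1 \<Rightarrow> 'a::ab_group_add \<Rightarrow> 'a) \<Rightarrow> 'a set \<Rightarrow> nat \<Rightarrow> ('a list \<Rightarrow> 'k) \<Rightarrow> bool" where
  "mlin sc S n \<phi> \<longleftrightarrow>
    (\<forall>us vs x y. length us + Suc (length vs) = n \<longrightarrow> set us \<subseteq> S \<longrightarrow> set vs \<subseteq> S \<longrightarrow> x \<in> S \<longrightarrow> y \<in> S \<longrightarrow>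
        \<phi> (us @ (x + y) # vs) = \<phi> (us @ x # vs) + \<phi> (us @ y # vs)) \<and>
    (\<forall>us vs x r. length us + Suc (length vs) = n \<longrightarrow> set us \<subseteq> S \<longrightarrow> set vs \<subseteq> S \<longrightarrow> x \<in> S \<longrightarrow>
        \<phi> (us @ sc r x # vs) = r * \<phi> (us @ x # vs))"

lemma sum_delta_mult:
  fixes \<phi> :: "'a list \<Rightarrow> 'k::comm_ring_1"
  assumes "finite G" "w \<in> G"
  shows "(\<Sum>v\<in>G. delta w v * \<phi> v) = \<phi> w"
proof -
  have "(\<Sum>v\<in>G. delta w v * \<phi> v) = (\<Sum>v\<in>G. if v = w then \<phi> v else 0)"
    by (rule sum.cong) (auto simp: delta_def)
  also have "\<dots> = \<phi> w" using assms by (simp add: sum.delta')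
  finally show ?thesis .
qed

lemma tensor_rel_kill:
  fixes \<phi> :: "'a::ab_group_add list \<Rightarrow> 'k::comm_ring_1"
  assumes "p \<in> tensor_rel sc S n" "mlin sc S n \<phi>"
  shows "\<exists>F. finite F \<and> (\<forall>G. finite G \<longrightarrow> F \<subseteq> G \<longrightarrow> (\<Sum>v\<in>G. p v * \<phi> v) = 0)"
  using assms(1)
proof (induction rule: tensor_rel.induct)
  case zero
  then show ?case by auto
next
  case (add p q)
  then obtain F1 F2 where "finite F1" "\<forall>G. finite G \<longrightarrow> F1 \<subseteq> G \<longrightarrow> (\<Sum>v\<in>G. p v * \<phi> v) = 0"
    "finite F2" "\<forall>G. finite G \<longrightarrow> F2 \<subseteq> G \<longrightarrow> (\<Sum>v\<in>G. q v * \<phi> v) = 0" by blast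
  then show ?case
    by (intro exI[of _ "F1 \<union> F2"]) (auto simp: distrib_right sum.distrib)
next
  case (smult p r)
  then obtain F1 where "finite F1" "\<forall>G. finite G \<longrightarrow> F1 \<subseteq> G \<longrightarrow> (\<Sum>v\<in>G. p v * \<phi> v) = 0" by blast
  then show ?case
    by (intro exI[of _ F1]) (auto simp: mult.assoc sum_distrib_left[symmetric])
next
  case (additive us vs x y)
  let ?A = "us @ (x + y) # vs" and ?B = "us @ x # vs" and ?C = "us @ y # vs"
  show ?case
  proof (intro exI[of _ "{?A, ?B, ?C}"] conjI allI impI)
    fix G :: "'a list set" assume G: "finite G" "{?A, ?B, ?C} \<subseteq> G"
    have "(\<Sum>v\<in>G. (delta ?A v - delta ?B v - delta ?C v) * \<phi> v)
        = (\<Sum>v\<in>G. delta ?A v * \<phi> v) - (\<Sum>v\<in>G. delta ?B v * \<phi> v) - (\<Sum>v\<in>G. delta ?C v * \<phi> v)"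
      by (simp add: left_diff_distrib sum_subtractf)
    also have "\<dots> = \<phi> ?A - \<phi> ?B - \<phi> ?C" using G by (simp add: sum_delta_mult)
    also have "\<dots> = 0" using assms(2) additive by (simp add: mlin_def)
    finally show "(\<Sum>v\<in>G. (delta ?A v - delta ?B v - delta ?C v) * \<phi> v) = 0" .
  qed simp
next
  case (homog us vs x r)
  let ?A = "us @ sc r x # vs" and ?B = "us @ x # vs"
  show ?case
  proof (intro exI[of _ "{?A, ?B}"] conjI allI impI)
    fix G :: "'a list set" assume G: "finite G" "{?A, ?B} \<subseteq> G"
    have "(\<Sum>v\<in>G. (delta ?A v - r * delta ?B v) * \<phi> v)
        = (\<Sum>v\<in>G. delta ?A v * \<phi> v) - r * (\<Sum>v\<in>G. delta ?B v * \<phi> v)"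
      by (simp add: left_diff_distrib sum_subtractf sum_distrib_left mult.assoc)
    also have "\<dots> = \<phi> ?A - r * \<phi> ?B" using G by (simp add: sum_delta_mult)
    also have "\<dots> = 0" using assms(2) homog by (simp add: mlin_def)
    finally show "(\<Sum>v\<in>G. (delta ?A v - r * delta ?B v) * \<phi> v) = 0" .
  qed simp
qed

lemma sum_count_list:
  fixes \<phi> :: "'a \<Rightarrow> 'k::comm_ring_1"
  assumes "finite G" "set xs \<subseteq> G"
  shows "(\<Sum>v\<in>G. of_nat (count_list xs v) * \<phi> v) = sum_list (map \<phi> xs)"
  using assms(2)
proof (induction xs)
  case Nil
  then show ?case by simp
next
  case (Cons x xs)
  have "(\<Sum>v\<in>G. of_nat (count_list (x # xs) v) * \<phi> v)
      = (\<Sum>v\<in>G. (if v = x then \<phi> v else 0) + of_nat (count_list xs v) * \<phi> v)"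
    by (rule sum.cong) (auto simp: distrib_right)
  also have "\<dots> = \<phi> x + sum_list (map \<phi> xs)"
    using Cons assms(1) by (simp add: sum.distrib sum.delta')
  finally show ?case by simp
qed

lemma tensor_eq_eval:
  fixes \<phi> :: "'a::ab_group_add list \<Rightarrow> 'k::comm_ring_1"
  assumes "tensor_eq sc S n xs ys" "mlin sc S n \<phi>"
  shows "sum_list (map \<phi> xs) = sum_list (map \<phi> ys)"
proof -
  let ?p = "\<lambda>v. (of_nat (count_list xs v) :: 'k) - of_nat (count_list ys v)"
  have "?p \<in> tensor_rel sc S n" using assms(1) by (simp add: tensor_eq_def)
  from tensor_rel_kill[OF this assms(2)] obtain F where F: "finite F"
    "\<forall>G. finite G \<longrightarrow> F \<subseteq> G \<longrightarrow> (\<Sum>v\<in>G. ?p v * \<phi> v) = 0" by blast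
  let ?G = "F \<union> set xs \<union> set ys"
  have "(\<Sum>v\<in>?G. ?p v * \<phi> v) = 0" by (rule F(2)[rule_format]) (use F(1) in auto)
  then have "0 = (\<Sum>v\<in>?G. ?p v * \<phi> v)" by simp
  also have "\<dots> = (\<Sum>v\<in>?G. of_nat (count_list xs v) * \<phi> v) - (\<Sum>v\<in>?G. of_nat (count_list ys v) * \<phi> v)"
    by (simp add: left_diff_distrib sum_subtractf)
  also have "\<dots> = sum_list (map \<phi> xs) - sum_list (map \<phi> ys)"
  proof -
    have "(\<Sum>v\<in>?G. of_nat (count_list xs v) * \<phi> v) = sum_list (map \<phi> xs)"
      by (rule sum_count_list) (use F(1) in auto)
    moreover have "(\<Sum>v\<in>?G. of_nat (count_list ys v) * \<phi> v) = sum_list (map \<phi> ys)"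
      by (rule sum_count_list) (use F(1) in auto)
    ultimately show ?thesis by simp
  qed
  finally show ?thesis by simp
qed


lemma lin_add: "lin_on sa S sb F \<Longrightarrow> x \<in> S \<Longrightarrow> y \<in> S \<Longrightarrow> F (x + y) = F x + F y"
  by (simp add: lin_on_def)

lemma lin_sc: "lin_on sa S sb F \<Longrightarrow> x \<in> S \<Longrightarrow> F (sa r x) = sb r (F x)"
  by (simp add: lin_on_def)

lemma lin_zero: "lin_on sa S sb F \<Longrightarrow> 0 \<in> S \<Longrightarrow> F 0 = 0"
  using lin_add[of sa S sb F 0 0] by simp

lemma lin_sum_list:
  assumes "lin_on sa S sb F" "0 \<in> S" "\<And>x y. x \<in> S \<Longrightarrow> y \<in> S \<Longrightarrow> x + y \<in> S" "\<forall>x\<in>set xs. x \<in> S"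
  shows "F (sum_list xs) = sum_list (map F xs)"
  using assms(4)
proof (induction xs)
  case Nil
  then show ?case using lin_zero[OF assms(1,2)] by simp
next
  case (Cons x xs)
  have "sum_list xs \<in> S" using Cons.prems
    by (induction xs) (auto simp: assms(2,3))
  then show ?case using Cons lin_add[OF assms(1)] by simp
qed

locale modu =
  fixes sc :: "'k::comm_ring_1 \<Rightarrow> 'a::ab_group_add \<Rightarrow> 'a" and S :: "'a set"
  assumes modu: "module_on sc S"
begin

lemma zero_in[simp]: "0 \<in> S" using modu by (simp add: module_on_def)
lemma add_in[simp]: "x \<in> S \<Longrightarrow> y \<in> S \<Longrightarrow> x + y \<in> S" using modu by (simp add: module_on_def)
lemma neg_in[simp]: "x \<in> S \<Longrightarrow> - x \<in> S" using modu by (simp add: module_on_def)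
lemma diff_in[simp]: "x \<in> S \<Longrightarrow> y \<in> S \<Longrightarrow> x - y \<in> S"
  using add_in neg_in by (metis diff_conv_add_uminus)
lemma sc_in[simp]: "x \<in> S \<Longrightarrow> sc r x \<in> S" using modu by (simp add: module_on_def)
lemma sc_add_r: "x \<in> S \<Longrightarrow> y \<in> S \<Longrightarrow> sc r (x + y) = sc r x + sc r y" using modu by (simp add: module_on_def)
lemma sc_add_l: "x \<in> S \<Longrightarrow> sc (r + s) x = sc r x + sc s x" using modu by (simp add: module_on_def)
lemma sc_sc: "x \<in> S \<Longrightarrow> sc r (sc s x) = sc (r * s) x" using modu by (simp add: module_on_def)
lemma sc_one[simp]: "x \<in> S \<Longrightarrow> sc 1 x = x" using modu by (simp add: module_on_def)
lemma sc_zero_l[simp]: "x \<in> S \<Longrightarrow> sc 0 x = 0"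
  using sc_add_l[of x 0 0] by simp
lemma sc_zero_r[simp]: "sc r 0 = 0"
  using sc_add_r[of 0 0 r] by simp

lemma sum_list_in[simp]: "(\<forall>x\<in>set xs. x \<in> S) \<Longrightarrow> sum_list xs \<in> S"
  by (induction xs) auto

lemma sum_list_map_in[simp]: "(\<And>x. x \<in> set xs \<Longrightarrow> f x \<in> S) \<Longrightarrow> sum_list (map f xs) \<in> S"
  by (induction xs) auto

lemma sc_sum_list: "(\<And>x. x \<in> set xs \<Longrightarrow> f x \<in> S) \<Longrightarrow> sc r (sum_list (map f xs)) = (\<Sum>x\<leftarrow>xs. sc r (f x))"
  by (induction xs) (auto simp: sc_add_r)

lemma sum_list_sc_left: "x \<in> S \<Longrightarrow> (\<Sum>i\<leftarrow>is. sc (c i) x) = sc (sum_list (map c is)) x"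
  by (induction "is") (auto simp: sc_add_l)

lemma lin_sum:
  assumes "lin_on sc S sb F" "\<And>x. x \<in> set xs \<Longrightarrow> f x \<in> S"
  shows "F (sum_list (map f xs)) = (\<Sum>x\<leftarrow>xs. F (f x))"
  using lin_sum_list[OF assms(1), of "map f xs"] assms(2) by (simp add: o_def)

lemma lin_sum_sc:
  assumes "lin_on sc S sb F" "\<And>x. x \<in> set xs \<Longrightarrow> f x \<in> S"
  shows "F (\<Sum>x\<leftarrow>xs. sc (c x) (f x)) = (\<Sum>x\<leftarrow>xs. sb (c x) (F (f x)))"
  using lin_sum[OF assms(1), of xs "\<lambda>x. sc (c x) (f x)"] assms(2) lin_sc[OF assms(1)]
  by (simp cong: map_cong)

lemma lfun_sum_sc:
  assumes "lin_on sc S (\<lambda>r s. r * s) F" "\<And>x. x \<in> set xs \<Longrightarrow> f x \<in> S"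
  shows "F (\<Sum>x\<leftarrow>xs. sc (c x) (f x)) = (\<Sum>x\<leftarrow>xs. c x * F (f x))"
  using lin_sum_sc[OF assms] .

end

definition bilin :: "('k::comm_ring_1 \<Rightarrow> 'a::ab_group_add \<Rightarrow> 'a) \<Rightarrow> 'a set \<Rightarrow> ('a \<Rightarrow> 'a \<Rightarrow> 'k) \<Rightarrow> bool" where
  "bilin sc S B \<longleftrightarrow> (\<forall>y\<in>S. lin_on sc S (\<lambda>r s. r * s) (\<lambda>x. B x y)) \<and> (\<forall>x\<in>S. lin_on sc S (\<lambda>r s. r * s) (B x))"

definition trilin :: "('k::comm_ring_1 \<Rightarrow> 'a::ab_group_add \<Rightarrow> 'a) \<Rightarrow> 'a set \<Rightarrow> ('a \<Rightarrow> 'a \<Rightarrow> 'a \<Rightarrow> 'k) \<Rightarrow> bool" where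
  "trilin sc S C \<longleftrightarrow> (\<forall>y\<in>S. \<forall>z\<in>S. lin_on sc S (\<lambda>r s. r * s) (\<lambda>x. C x y z)) \<and>
     (\<forall>x\<in>S. \<forall>z\<in>S. lin_on sc S (\<lambda>r s. r * s) (\<lambda>y. C x y z)) \<and> (\<forall>x\<in>S. \<forall>y\<in>S. lin_on sc S (\<lambda>r s. r * s) (C x y))"

definition sw :: "('a \<Rightarrow> ('a \<times> 'a) list) \<Rightarrow> 'a \<Rightarrow> ('a \<Rightarrow> 'a \<Rightarrow> 'b::comm_monoid_add) \<Rightarrow> 'b" where
  "sw cm a F = sum_list (map (\<lambda>(x, y). F x y) (cm a))"

lemma len2_cases:
  assumes "length us + Suc (length vs) = 2"
  obtains v where "us = []" "vs = [v]" | u where "us = [u]" "vs = []"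
  using assms by (cases us; cases vs) auto

lemma len3_cases:
  assumes "length us + Suc (length vs) = 3"
  obtains v w where "us = []" "vs = [v, w]" | u w where "us = [u]" "vs = [w]" | u v where "us = [u, v]" "vs = []"
proof -
  consider "length us = 0" "length vs = 2" | "length us = 1" "length vs = 1" | "length us = 2" "length vs = 0"
    using assms by linarith
  then show ?thesis
  proof cases
    case 1 then show ?thesis using that(1) by (auto simp: length_Suc_conv numeral_2_eq_2)
  next
    case 2 then show ?thesis using that(2) by (auto simp: length_Suc_conv)
  next
    case 3 then show ?thesis using that(3) by (auto simp: length_Suc_conv numeral_2_eq_2)
  qed
qed

lemma bilin_l_add: "bilin sc S B \<Longrightarrow> x \<in> S \<Longrightarrow> y \<in> S \<Longrightarrow> z \<in> S \<Longrightarrow> B (x + y) z = B x z + B y z"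
  unfolding bilin_def lin_on_def by blast
lemma bilin_r_add: "bilin sc S B \<Longrightarrow> x \<in> S \<Longrightarrow> y \<in> S \<Longrightarrow> z \<in> S \<Longrightarrow> B z (x + y) = B z x + B z y"
  unfolding bilin_def lin_on_def by blast
lemma bilin_l_sc: "bilin sc S B \<Longrightarrow> x \<in> S \<Longrightarrow> z \<in> S \<Longrightarrow> B (sc r x) z = r * B x z"
  unfolding bilin_def lin_on_def by blast
lemma bilin_r_sc: "bilin sc S B \<Longrightarrow> x \<in> S \<Longrightarrow> z \<in> S \<Longrightarrow> B z (sc r x) = r * B z x"
  unfolding bilin_def lin_on_def by blast

lemma trilin_1_add: "trilin sc S C \<Longrightarrow> x \<in> S \<Longrightarrow> y \<in> S \<Longrightarrow> u \<in> S \<Longrightarrow> v \<in> S \<Longrightarrow> C (x + y) u v = C x u v + C y u v"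
  unfolding trilin_def lin_on_def by blast
lemma trilin_2_add: "trilin sc S C \<Longrightarrow> x \<in> S \<Longrightarrow> y \<in> S \<Longrightarrow> u \<in> S \<Longrightarrow> v \<in> S \<Longrightarrow> C u (x + y) v = C u x v + C u y v"
  unfolding trilin_def lin_on_def by blast
lemma trilin_3_add: "trilin sc S C \<Longrightarrow> x \<in> S \<Longrightarrow> y \<in> S \<Longrightarrow> u \<in> S \<Longrightarrow> v \<in> S \<Longrightarrow> C u v (x + y) = C u v x + C u v y"
  unfolding trilin_def lin_on_def by blast
lemma trilin_1_sc: "trilin sc S C \<Longrightarrow> x \<in> S \<Longrightarrow> u \<in> S \<Longrightarrow> v \<in> S \<Longrightarrow> C (sc r x) u v = r * C x u v"
  unfolding trilin_def lin_on_def by blast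
lemma trilin_2_sc: "trilin sc S C \<Longrightarrow> x \<in> S \<Longrightarrow> u \<in> S \<Longrightarrow> v \<in> S \<Longrightarrow> C u (sc r x) v = r * C u x v"
  unfolding trilin_def lin_on_def by blast
lemma trilin_3_sc: "trilin sc S C \<Longrightarrow> x \<in> S \<Longrightarrow> u \<in> S \<Longrightarrow> v \<in> S \<Longrightarrow> C u v (sc r x) = r * C u v x"
  unfolding trilin_def lin_on_def by blast

lemma mlin2:
  assumes "bilin sc S B"
  shows "mlin sc S 2 (\<lambda>w. B (w ! 0) (w ! Suc 0))"
  unfolding mlin_def
proof (intro conjI allI impI)
  fix us vs and x y
  assume l: "length us + Suc (length vs) = 2" and s: "set us \<subseteq> S" "set vs \<subseteq> S" "x \<in> S" "y \<in> S"
  from l show "B ((us @ (x + y) # vs) ! 0) ((us @ (x + y) # vs) ! Suc 0) =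
       B ((us @ x # vs) ! 0) ((us @ x # vs) ! Suc 0) + B ((us @ y # vs) ! 0) ((us @ y # vs) ! Suc 0)"
    by (cases rule: len2_cases) (use s in \<open>simp_all add: bilin_l_add[OF assms] bilin_r_add[OF assms]\<close>)
next
  fix us vs and x r
  assume l: "length us + Suc (length vs) = 2" and s: "set us \<subseteq> S" "set vs \<subseteq> S" "x \<in> S"
  from l show "B ((us @ sc r x # vs) ! 0) ((us @ sc r x # vs) ! Suc 0) = r * B ((us @ x # vs) ! 0) ((us @ x # vs) ! Suc 0)"
    by (cases rule: len2_cases) (use s in \<open>simp_all add: bilin_l_sc[OF assms] bilin_r_sc[OF assms]\<close>)
qed

lemma mlin3:
  assumes "trilin sc S C"
  shows "mlin sc S 3 (\<lambda>w. C (w ! 0) (w ! Suc 0) (w ! Suc (Suc 0)))"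
  unfolding mlin_def
proof (intro conjI allI impI)
  fix us vs and x y
  assume l: "length us + Suc (length vs) = 3" and s: "set us \<subseteq> S" "set vs \<subseteq> S" "x \<in> S" "y \<in> S"
  from l show "C ((us @ (x + y) # vs) ! 0) ((us @ (x + y) # vs) ! Suc 0) ((us @ (x + y) # vs) ! Suc (Suc 0)) =
       C ((us @ x # vs) ! 0) ((us @ x # vs) ! Suc 0) ((us @ x # vs) ! Suc (Suc 0)) +
       C ((us @ y # vs) ! 0) ((us @ y # vs) ! Suc 0) ((us @ y # vs) ! Suc (Suc 0))"
    by (cases rule: len3_cases) (use s in \<open>simp_all add: trilin_1_add[OF assms] trilin_2_add[OF assms] trilin_3_add[OF assms]\<close>)
next
  fix us vs and x r
  assume l: "length us + Suc (length vs) = 3" and s: "set us \<subseteq> S" "set vs \<subseteq> S" "x \<in> S"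
  from l show "C ((us @ sc r x # vs) ! 0) ((us @ sc r x # vs) ! Suc 0) ((us @ sc r x # vs) ! Suc (Suc 0)) =
       r * C ((us @ x # vs) ! 0) ((us @ x # vs) ! Suc 0) ((us @ x # vs) ! Suc (Suc 0))"
    by (cases rule: len3_cases) (use s in \<open>simp_all add: trilin_1_sc[OF assms] trilin_2_sc[OF assms] trilin_3_sc[OF assms]\<close>)
qed

lemma tensor_eq_eval2:
  assumes "tensor_eq sc S 2 xs ys" "bilin sc S B"
  shows "(\<Sum>w\<leftarrow>xs. B (w ! 0) (w ! Suc 0)) = (\<Sum>w\<leftarrow>ys. B (w ! 0) (w ! Suc 0))"
  using tensor_eq_eval[OF assms(1) mlin2[OF assms(2)]] .

lemma tensor_eq_eval3:
  assumes "tensor_eq sc S 3 xs ys" "trilin sc S C"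
  shows "(\<Sum>w\<leftarrow>xs. C (w ! 0) (w ! Suc 0) (w ! Suc (Suc 0))) = (\<Sum>w\<leftarrow>ys. C (w ! 0) (w ! Suc 0) (w ! Suc (Suc 0)))"
  using tensor_eq_eval[OF assms(1) mlin3[OF assms(2)]] .

lemma sum_tens2: "(\<Sum>w\<leftarrow>tens2 L. B (w ! 0) (w ! Suc 0)) = sum_list (map (\<lambda>(x, y). B x y) L)"
  by (induction L) (auto simp: tens2_def)



section \<open>Dual bases from finitely generated projectivity\<close>

lemma fgp_dual_basis:
  fixes sc :: "'k::comm_ring_1 \<Rightarrow> 'a::ab_group_add \<Rightarrow> 'a"
  assumes "module_on sc S" "fin_gen_proj sc S"
  shows "\<exists>L. (\<forall>(\<mu>, m)\<in>set L. lin_on sc S (\<lambda>r s. r * s) \<mu> \<and> m \<in> S) \<and>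
             (\<forall>x\<in>S. (\<Sum>(\<mu>, m)\<leftarrow>L. sc (\<mu> x) m) = x)"
proof -
  interpret modu sc S by standard (rule assms(1))
  obtain n p i where pi: "lin_on kn_scale (kn n) sc p" "p ` kn n \<subseteq> S"
      "lin_on sc S kn_scale i" "i ` S \<subseteq> kn n" "\<forall>a\<in>S. p (i a) = a"
    using assms(2) unfolding fin_gen_proj_def by (elim exE conjE) (rule that, assumption+)
  define d :: "nat \<Rightarrow> nat \<Rightarrow> 'k" where "d j = (\<lambda>l. if l = j then 1 else 0)" for j
  have dkn: "j < n \<Longrightarrow> d j \<in> kn n" for j by (simp add: kn_def d_def)
  let ?L = "map (\<lambda>j. ((\<lambda>x. i x j), p (d j))) [0..<n]"
  have knadd: "u \<in> kn n \<Longrightarrow> v \<in> kn n \<Longrightarrow> u + v \<in> kn n" for u v :: "nat \<Rightarrow> 'k"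
    by (simp add: kn_def)
  have kn0: "(0 :: nat \<Rightarrow> 'k) \<in> kn n" by (simp add: kn_def)
  have knsc: "u \<in> kn n \<Longrightarrow> kn_scale r u \<in> kn n" for u :: "nat \<Rightarrow> 'k" and r by (simp add: kn_def kn_scale_def)
  show ?thesis
  proof (intro exI[of _ ?L] conjI ballI)
    fix z assume "z \<in> set ?L"
    then obtain j where j: "j < n" "z = ((\<lambda>x. i x j), p (d j))" by auto
    have "lin_on sc S (\<lambda>r s. r * s) (\<lambda>x. i x j)"
      using pi(3) unfolding lin_on_def kn_scale_def by (simp add: plus_fun_def)
    moreover have "p (d j) \<in> S" using pi(2) dkn[OF j(1)] by auto
    ultimately show "case z of (\<mu>, m) \<Rightarrow> lin_on sc S (\<lambda>r s. r * s) \<mu> \<and> m \<in> S" using j by simp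
  next
    fix x assume x: "x \<in> S"
    have ix: "i x \<in> kn n" using pi(4) x by auto
    have decomp: "i x = (\<Sum>j\<leftarrow>[0..<n]. kn_scale (i x j) (d j))"
    proof
      fix l
      have "(\<Sum>j\<leftarrow>[0..<n]. kn_scale (i x j) (d j)) l = (\<Sum>j\<leftarrow>[0..<n]. i x j * d j l)"
        by (simp add: sum_list_fun_apply o_def kn_scale_def)
      also have "\<dots> = (\<Sum>j\<in>{0..<n}. i x j * d j l)"
        by (simp add: sum_list_distinct_conv_sum_set)
      also have "\<dots> = (\<Sum>j\<in>{0..<n}. if j = l then i x j else 0)"
        by (rule sum.cong) (auto simp: d_def)
      also have "\<dots> = (if l < n then i x l else 0)"
        by simp
      also have "\<dots> = i x l" using ix by (auto simp: kn_def)
      finally show "i x l = (\<Sum>j\<leftarrow>[0..<n]. kn_scale (i x j) (d j)) l" by simp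
    qed
    have "x = p (i x)" using pi(5) x by simp
    also have "\<dots> = p (\<Sum>j\<leftarrow>[0..<n]. kn_scale (i x j) (d j))" by (rule arg_cong[OF decomp])
    also have "\<dots> = (\<Sum>j\<leftarrow>[0..<n]. p (kn_scale (i x j) (d j)))"
    proof -
      have "\<forall>y\<in>set (map (\<lambda>j. kn_scale (i x j) (d j)) [0..<n]). y \<in> kn n" using dkn knsc by auto
      then have "p (sum_list (map (\<lambda>j. kn_scale (i x j) (d j)) [0..<n])) = sum_list (map p (map (\<lambda>j. kn_scale (i x j) (d j)) [0..<n]))"
        using lin_sum_list[OF pi(1) kn0 knadd] by blast
      then show ?thesis by (simp add: o_def)
    qed
    also have "\<dots> = (\<Sum>j\<leftarrow>[0..<n]. sc (i x j) (p (d j)))"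
      using lin_sc[OF pi(1)] dkn by (intro sum_list_map_cong') auto
    finally show "(\<Sum>(\<mu>, m)\<leftarrow>?L. sc (\<mu> x) m) = x" by (simp add: o_def)
  qed
qed


section \<open>Bialgebras with evaluated axioms\<close>

locale ebialg = modu sc S
  for sc :: "'k::comm_ring_1 \<Rightarrow> 'a::ab_group_add \<Rightarrow> 'a" and S +
  fixes mult :: "'a \<Rightarrow> 'a \<Rightarrow> 'a" and one :: 'a and comult :: "'a \<Rightarrow> ('a \<times> 'a) list" and counit :: "'a \<Rightarrow> 'k"
  assumes mult_in[simp]: "a \<in> S \<Longrightarrow> b \<in> S \<Longrightarrow> mult a b \<in> S"
    and one_in[simp]: "one \<in> S"
    and mult_lin_r: "a \<in> S \<Longrightarrow> lin_on sc S sc (mult a)"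
    and mult_lin_l: "b \<in> S \<Longrightarrow> lin_on sc S sc (\<lambda>a. mult a b)"
    and assoc: "a \<in> S \<Longrightarrow> b \<in> S \<Longrightarrow> c \<in> S \<Longrightarrow> mult (mult a b) c = mult a (mult b c)"
    and one_l[simp]: "a \<in> S \<Longrightarrow> mult one a = a"
    and one_r[simp]: "a \<in> S \<Longrightarrow> mult a one = a"
    and comult_in: "a \<in> S \<Longrightarrow> (x, y) \<in> set (comult a) \<Longrightarrow> x \<in> S \<and> y \<in> S"
    and counit_lin: "lin_on sc S (\<lambda>r s. r * s) counit"
    and counit_l: "a \<in> S \<Longrightarrow> (\<Sum>(x, y)\<leftarrow>comult a. sc (counit x) y) = a"
    and counit_r: "a \<in> S \<Longrightarrow> (\<Sum>(x, y)\<leftarrow>comult a. sc (counit y) x) = a"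
    and counit_mult: "a \<in> S \<Longrightarrow> b \<in> S \<Longrightarrow> counit (mult a b) = counit a * counit b"
    and counit_one: "counit one = 1"
    and E_add: "a \<in> S \<Longrightarrow> b \<in> S \<Longrightarrow> bilin sc S B \<Longrightarrow> sw comult (a + b) B = sw comult a B + sw comult b B"
    and E_hom: "a \<in> S \<Longrightarrow> bilin sc S B \<Longrightarrow> sw comult (sc r a) B = sw comult a (\<lambda>x y. B (sc r x) y)"
    and E_mult: "a \<in> S \<Longrightarrow> b \<in> S \<Longrightarrow> bilin sc S B \<Longrightarrow>
        sw comult (mult a b) B = sw comult a (\<lambda>a1 a2. sw comult b (\<lambda>b1 b2. B (mult a1 b1) (mult a2 b2)))"
    and E_coassoc: "a \<in> S \<Longrightarrow> trilin sc S C \<Longrightarrow>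
        sw comult a (\<lambda>a1 a2. sw comult a1 (\<lambda>b1 b2. C b1 b2 a2)) = sw comult a (\<lambda>a1 a2. sw comult a2 (\<lambda>c1 c2. C a1 c1 c2))"
    and E_one: "bilin sc S B \<Longrightarrow> sw comult one B = B one one"
    and sep: "\<exists>L. (\<forall>(\<mu>, m)\<in>set L. lin_on sc S (\<lambda>r s. r * s) \<mu> \<and> m \<in> S) \<and>
             (\<forall>x\<in>S. (\<Sum>(\<mu>, m)\<leftarrow>L. sc (\<mu> x) m) = x)"

lemma tens2_append: "tens2 (xs @ ys) = tens2 xs @ tens2 ys" by (simp add: tens2_def)

lemma bialgebra_ebialg:
  fixes sc :: "'k::comm_ring_1 \<Rightarrow> 'a::ab_group_add \<Rightarrow> 'a"
  assumes B: "bialgebra sc S mult one comult counit" and P: "fin_gen_proj sc S"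
  shows "ebialg sc S mult one comult counit"
proof -
  have M: "module_on sc S" using B by (simp add: bialgebra_def)
  interpret modu sc S by standard (rule M)
  note BB = B[unfolded bialgebra_def]
  show ?thesis
  proof (unfold_locales)
    show "\<exists>L. (\<forall>(\<mu>, m)\<in>set L. lin_on sc S (\<lambda>r s. r * s) \<mu> \<and> m \<in> S) \<and>
             (\<forall>x\<in>S. (\<Sum>(\<mu>, m)\<leftarrow>L. sc (\<mu> x) m) = x)"
      by (rule fgp_dual_basis[OF M P])
  next
    fix a b B' assume ab: "a \<in> S" "b \<in> S" and bl: "bilin sc S B'"
    have "tensor_eq sc S 2 (tens2 (comult (a + b))) (tens2 (comult a @ comult b))" using BB ab by blast
    from tensor_eq_eval2[OF this bl]
    show "sw comult (a + b) B' = sw comult a B' + sw comult b B'"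
      by (simp add: sum_tens2 sw_def tens2_append)
  next
    fix a r B' assume a: "a \<in> S" and bl: "bilin sc S B'"
    have "tensor_eq sc S 2 (tens2 (comult (sc r a))) (map (\<lambda>(x, y). [sc r x, y]) (comult a))" using BB a by blast
    from tensor_eq_eval2[OF this bl]
    show "sw comult (sc r a) B' = sw comult a (\<lambda>x y. B' (sc r x) y)"
      by (simp add: sum_tens2 sw_def o_def split_def)
  next
    fix a b B' assume ab: "a \<in> S" "b \<in> S" and bl: "bilin sc S B'"
    have "tensor_eq sc S 2 (tens2 (comult (mult a b)))
        (concat (map (\<lambda>(a1, a2). map (\<lambda>(b1, b2). [mult a1 b1, mult a2 b2]) (comult b)) (comult a)))"
      using BB ab by blast
    from tensor_eq_eval2[OF this bl]
    show "sw comult (mult a b) B' = sw comult a (\<lambda>a1 a2. sw comult b (\<lambda>b1 b2. B' (mult a1 b1) (mult a2 b2)))"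
      by (simp add: sum_tens2 sw_def o_def split_def sum_list_concat_map)
  next
    fix a C assume a: "a \<in> S" and tl: "trilin sc S C"
    have "tensor_eq sc S 3
        (concat (map (\<lambda>(a1, a2). map (\<lambda>(b1, b2). [b1, b2, a2]) (comult a1)) (comult a)))
        (concat (map (\<lambda>(a1, a2). map (\<lambda>(c1, c2). [a1, c1, c2]) (comult a2)) (comult a)))"
      using BB a by blast
    from tensor_eq_eval3[OF this tl]
    show "sw comult a (\<lambda>a1 a2. sw comult a1 (\<lambda>b1 b2. C b1 b2 a2)) = sw comult a (\<lambda>a1 a2. sw comult a2 (\<lambda>c1 c2. C a1 c1 c2))"
      by (simp add: sw_def o_def split_def sum_list_concat_map)
  next
    fix B' assume bl: "bilin sc S B'"
    have "tensor_eq sc S 2 (tens2 (comult one)) [[one, one]]" using BB by blast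
    from tensor_eq_eval2[OF this bl]
    show "sw comult one B' = B' one one"
      by (simp add: sum_tens2 sw_def)
  qed (use BB in \<open>auto\<close>)
qed

context ebialg
begin

lemma comult_in1: "a \<in> S \<Longrightarrow> (x, y) \<in> set (comult a) \<Longrightarrow> x \<in> S" using comult_in by blast
lemma comult_in2: "a \<in> S \<Longrightarrow> (x, y) \<in> set (comult a) \<Longrightarrow> y \<in> S" using comult_in by blast

lemma mult_add_r: "a \<in> S \<Longrightarrow> x \<in> S \<Longrightarrow> y \<in> S \<Longrightarrow> mult a (x + y) = mult a x + mult a y"
  using mult_lin_r lin_add by blast
lemma mult_add_l: "b \<in> S \<Longrightarrow> x \<in> S \<Longrightarrow> y \<in> S \<Longrightarrow> mult (x + y) b = mult x b + mult y b"
  using mult_lin_l[of b] lin_add[of sc S sc "\<lambda>a. mult a b"] by blast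
lemma mult_sc_r: "a \<in> S \<Longrightarrow> x \<in> S \<Longrightarrow> mult a (sc r x) = sc r (mult a x)"
  using mult_lin_r lin_sc by blast
lemma mult_sc_l: "b \<in> S \<Longrightarrow> x \<in> S \<Longrightarrow> mult (sc r x) b = sc r (mult x b)"
  using mult_lin_l[of b] lin_sc[of sc S sc "\<lambda>a. mult a b"] by blast

definition DB where "DB = (SOME L. (\<forall>(\<mu>, m)\<in>set L. lin_on sc S (\<lambda>r s. r * s) \<mu> \<and> m \<in> S) \<and>
             (\<forall>x\<in>S. (\<Sum>(\<mu>, m)\<leftarrow>L. sc (\<mu> x) m) = x))"

lemma DB: "(\<forall>(\<mu>, m)\<in>set DB. lin_on sc S (\<lambda>r s. r * s) \<mu> \<and> m \<in> S) \<and> (\<forall>x\<in>S. (\<Sum>(\<mu>, m)\<leftarrow>DB. sc (\<mu> x) m) = x)"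
  unfolding DB_def using someI_ex[OF sep] .

lemma DB_lin: "(\<mu>, m) \<in> set DB \<Longrightarrow> lin_on sc S (\<lambda>r s. r * s) \<mu>" using DB by blast
lemma DB_in: "(\<mu>, m) \<in> set DB \<Longrightarrow> m \<in> S" using DB by blast
lemma DB_expand: "x \<in> S \<Longrightarrow> (\<Sum>(\<mu>, m)\<leftarrow>DB. sc (\<mu> x) m) = x" using DB by blast

lemma sep_eq:
  assumes "x \<in> S" "y \<in> S" "\<And>g. lin_on sc S (\<lambda>r s. r * s) g \<Longrightarrow> g x = g y"
  shows "x = y"
proof -
  have "x = (\<Sum>(\<mu>, m)\<leftarrow>DB. sc (\<mu> x) m)" using DB_expand assms(1) by simp
  also have "\<dots> = (\<Sum>(\<mu>, m)\<leftarrow>DB. sc (\<mu> y) m)"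
    by (rule sum_list_map_cong') (auto simp: assms(3) DB_lin)
  also have "\<dots> = y" using DB_expand assms(2) by simp
  finally show ?thesis .
qed

end


section \<open>Sweedler sums\<close>

lemma sw_swap: "sw cm a (\<lambda>x y. sw cm' b (\<lambda>u v. F x y u v)) = sw cm' b (\<lambda>u v. sw cm a (\<lambda>x y. F x y u v))"
proof -
  have "\<And>L. (\<Sum>(x, y)\<leftarrow>L. \<Sum>(u, v)\<leftarrow>M. F x y u v) = (\<Sum>(u, v)\<leftarrow>M. \<Sum>(x, y)\<leftarrow>L. F x y u v)" for M
  proof -
    fix L show "(\<Sum>(x, y)\<leftarrow>L. \<Sum>(u, v)\<leftarrow>M. F x y u v) = (\<Sum>(u, v)\<leftarrow>M. \<Sum>(x, y)\<leftarrow>L. F x y u v)"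
      by (induction L) (auto simp: sum_list_addf split_def)
  qed
  then show ?thesis by (simp add: sw_def)
qed

lemma sw_mult_left: "(c::'k::comm_ring_1) * sw cm a F = sw cm a (\<lambda>x y. c * F x y)"
  by (simp add: sw_def sum_list_const_mult[symmetric] split_def)

lemma sw_mult_right: "sw cm a F * (c::'k::comm_ring_1) = sw cm a (\<lambda>x y. F x y * c)"
  by (simp add: sw_def sum_list_mult_const[symmetric] split_def)

lemma sw_cong: "(\<And>x y. (x, y) \<in> set (cm a) \<Longrightarrow> F x y = G x y) \<Longrightarrow> sw cm a F = sw cm a G"
  unfolding sw_def by (rule sum_list_map_cong') auto

lemma sw_add: "sw cm a (\<lambda>x y. F x y + G x y) = sw cm a F + sw cm a G"
  by (simp add: sw_def sum_list_addf split_def)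

lemma lfun_mult_const: "lin_on sc S (\<lambda>r s. r * s) F \<Longrightarrow> lin_on sc S (\<lambda>r s. r * s) (\<lambda>x. F x * (c::'k::comm_ring_1))"
  by (simp add: lin_on_def distrib_right)

lemma lfun_const_mult: "lin_on sc S (\<lambda>r s. r * s) F \<Longrightarrow> lin_on sc S (\<lambda>r s. r * s) (\<lambda>x. (c::'k::comm_ring_1) * F x)"
  by (simp add: lin_on_def distrib_left mult.left_commute)

lemma bilin_prod: "lin_on sc S (\<lambda>r s. r * s) F \<Longrightarrow> lin_on sc S (\<lambda>r s. r * s) G \<Longrightarrow> bilin sc S (\<lambda>x y. F x * G y)"
  unfolding bilin_def by (simp add: lfun_mult_const lfun_const_mult)

lemma lin_comp: "lin_on sc S sc F \<Longrightarrow> (\<And>x. x \<in> S \<Longrightarrow> F x \<in> S) \<Longrightarrow> lin_on sc S sb G \<Longrightarrow> lin_on sc S sb (\<lambda>x. G (F x))"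
  by (simp add: lin_on_def)

context modu
begin

lemma lin_sw:
  assumes "lin_on sc S sb F" "\<And>x y. (x, y) \<in> set (cm a) \<Longrightarrow> w x y \<in> S"
  shows "F (sw cm a w) = sw cm a (\<lambda>x y. F (w x y))"
proof -
  have "F (\<Sum>(x, y)\<leftarrow>L. w x y) = (\<Sum>(x, y)\<leftarrow>L. F (w x y))" if "set L \<subseteq> set (cm a)" for L
    using that
  proof (induction L)
    case Nil then show ?case using lin_zero[OF assms(1)] by simp
  next
    case (Cons p L)
    have "(\<Sum>(x, y)\<leftarrow>L. w x y) \<in> S" using Cons.prems assms(2) by (intro sum_list_map_in) auto
    moreover have "(case p of (x, y) \<Rightarrow> w x y) \<in> S" using Cons.prems assms(2) by (cases p) auto
    ultimately show ?case using Cons lin_add[OF assms(1)] by (cases p) auto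
  qed
  then show ?thesis by (simp add: sw_def)
qed

lemma sw_in[simp]: "(\<And>x y. (x, y) \<in> set (cm a) \<Longrightarrow> w x y \<in> S) \<Longrightarrow> sw cm a w \<in> S"
  unfolding sw_def by (rule sum_list_map_in) auto

lemma lfun_sw:
  assumes "\<And>x y. (x, y) \<in> set (cm a) \<Longrightarrow> lin_on sc S (\<lambda>r s. r * s) (\<lambda>p. H p x y)"
  shows "lin_on sc S (\<lambda>r s. r * s) (\<lambda>p. sw cm a (H p))"
  unfolding lin_on_def
proof (intro conjI ballI allI)
  fix p q assume "p \<in> S" "q \<in> S"
  have "sw cm a (H (p + q)) = sw cm a (\<lambda>x y. H p x y + H q x y)"
  proof (rule sw_cong)
    fix x y assume "(x, y) \<in> set (cm a)"
    from lin_add[OF assms[OF this] \<open>p \<in> S\<close> \<open>q \<in> S\<close>] show "H (p + q) x y = H p x y + H q x y" by simp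
  qed
  then show "sw cm a (H (p + q)) = sw cm a (H p) + sw cm a (H q)" by (simp add: sw_add)
next
  fix r p assume "p \<in> S"
  have "sw cm a (H (sc r p)) = sw cm a (\<lambda>x y. r * H p x y)"
  proof (rule sw_cong)
    fix x y assume "(x, y) \<in> set (cm a)"
    from lin_sc[OF assms[OF this] \<open>p \<in> S\<close>] show "H (sc r p) x y = r * H p x y" by simp
  qed
  then show "sw cm a (H (sc r p)) = r * sw cm a (H p)" by (simp add: sw_mult_left)
qed

lemma linS_sw:
  assumes "\<And>x y. (x, y) \<in> set (cm a) \<Longrightarrow> lin_on sc S sc (\<lambda>p. H p x y)"
    and "\<And>p x y. p \<in> S \<Longrightarrow> (x, y) \<in> set (cm a) \<Longrightarrow> H p x y \<in> S"
  shows "lin_on sc S sc (\<lambda>p. sw cm a (H p))"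
  unfolding lin_on_def
proof (intro conjI ballI allI)
  fix p q assume pq: "p \<in> S" "q \<in> S"
  have "sw cm a (H (p + q)) = sw cm a (\<lambda>x y. H p x y + H q x y)"
  proof (rule sw_cong)
    fix x y assume "(x, y) \<in> set (cm a)"
    from lin_add[OF assms(1)[OF this] pq] show "H (p + q) x y = H p x y + H q x y" by simp
  qed
  then show "sw cm a (H (p + q)) = sw cm a (H p) + sw cm a (H q)" by (simp add: sw_add)
next
  fix r p assume p: "p \<in> S"
  have "sw cm a (H (sc r p)) = sw cm a (\<lambda>x y. sc r (H p x y))"
  proof (rule sw_cong)
    fix x y assume "(x, y) \<in> set (cm a)"
    from lin_sc[OF assms(1)[OF this] p] show "H (sc r p) x y = sc r (H p x y)" by simp
  qed
  also have "\<dots> = sc r (sw cm a (H p))"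
  proof -
    have "lin_on sc S sc (sc r)" by (simp add: lin_on_def sc_add_r sc_sc mult.commute)
    then show ?thesis using lin_sw[where F="sc r" and sb=sc and cm=cm and a=a and w="H p"] assms(2) p by simp
  qed
  finally show "sw cm a (H (sc r p)) = sc r (sw cm a (H p))" .
qed

end


context modu
begin

lemma lf_sw_sc:
  assumes "lin_on sc S (\<lambda>r s. r * s) G" "\<And>x y. (x, y) \<in> set (cm a) \<Longrightarrow> w x y \<in> S"
  shows "G (sw cm a (\<lambda>x y. sc (h x y) (w x y))) = sw cm a (\<lambda>x y. h x y * G (w x y))"
proof -
  have "G (sw cm a (\<lambda>x y. sc (h x y) (w x y))) = sw cm a (\<lambda>x y. G (sc (h x y) (w x y)))"
    using assms by (intro lin_sw) auto
  also have "\<dots> = sw cm a (\<lambda>x y. h x y * G (w x y))"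
    using assms by (intro sw_cong) (simp add: lin_sc)
  finally show ?thesis .
qed

lemma linS_sw_sc:
  assumes "lin_on sc S sc F" "\<And>x y. (x, y) \<in> set (cm a) \<Longrightarrow> w x y \<in> S"
  shows "F (sw cm a (\<lambda>x y. sc (h x y) (w x y))) = sw cm a (\<lambda>x y. sc (h x y) (F (w x y)))"
proof -
  have "F (sw cm a (\<lambda>x y. sc (h x y) (w x y))) = sw cm a (\<lambda>x y. F (sc (h x y) (w x y)))"
    using assms by (intro lin_sw) auto
  also have "\<dots> = sw cm a (\<lambda>x y. sc (h x y) (F (w x y)))"
    using assms by (intro sw_cong) (simp add: lin_sc)
  finally show ?thesis .
qed

end

context ebialg
begin

lemma comult_inD: "(x, y) \<in> set (comult a) \<Longrightarrow> a \<in> S \<Longrightarrow> x \<in> S \<and> y \<in> S"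
  using comult_in by blast

abbreviation lf where "lf g \<equiv> lin_on sc S (\<lambda>r s. r * s) g"

lemma lf_mult_r: "lf g \<Longrightarrow> a \<in> S \<Longrightarrow> lf (\<lambda>x. g (mult a x))"
  by (rule lin_comp[OF mult_lin_r]) auto

lemma lf_mult_l: "lf g \<Longrightarrow> b \<in> S \<Longrightarrow> lf (\<lambda>x. g (mult x b))"
  by (rule lin_comp[OF mult_lin_l]) auto

lemma sw_comult_in1: "a \<in> S \<Longrightarrow> (\<And>x y. x \<in> S \<Longrightarrow> y \<in> S \<Longrightarrow> w x y \<in> S) \<Longrightarrow> sw comult a w \<in> S"
  by (rule sw_in) (auto dest: comult_inD)

definition Sm :: "('a \<Rightarrow> 'k) \<Rightarrow> 'a \<Rightarrow> 'a \<Rightarrow> 'a" where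
  "Sm f t c = sw comult t (\<lambda>u v. sc (f (mult u c)) v)"

definition Zp :: "('a \<Rightarrow> 'k) \<Rightarrow> 'a \<Rightarrow> 'a \<Rightarrow> 'a" where
  "Zp f t' c = sw comult t' (\<lambda>x y. sc (f (mult c x)) y)"

lemma Sm_in[simp]: "t \<in> S \<Longrightarrow> Sm f t c \<in> S"
  unfolding Sm_def by (rule sw_in) (auto dest: comult_inD)

lemma Zp_in[simp]: "t' \<in> S \<Longrightarrow> Zp f t' c \<in> S"
  unfolding Zp_def by (rule sw_in) (auto dest: comult_inD)

lemma Sm_lin:
  assumes f: "lf f" and t: "t \<in> S"
  shows "lin_on sc S sc (Sm f t)"
  unfolding Sm_def
proof (rule linS_sw)
  fix x y assume xy: "(x, y) \<in> set (comult t)"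
  have x: "x \<in> S" and y: "y \<in> S" using comult_in1[OF t xy] comult_in2[OF t xy] by auto
  show "lin_on sc S sc (\<lambda>p. sc (f (mult x p)) y)"
    unfolding lin_on_def
  proof (intro conjI ballI allI)
    fix p q assume "p \<in> S" "q \<in> S"
    then show "sc (f (mult x (p + q))) y = sc (f (mult x p)) y + sc (f (mult x q)) y"
      using lin_add[OF lf_mult_r[OF f x]] y by (simp add: sc_add_l)
  next
    fix r p assume "p \<in> S"
    then show "sc (f (mult x (sc r p))) y = sc r (sc (f (mult x p)) y)"
      using lin_sc[OF lf_mult_r[OF f x]] y by (simp add: sc_sc)
  qed
next
  fix p x y assume xy: "(x, y) \<in> set (comult t)"
  show "sc (f (mult x p)) y \<in> S" using comult_in2[OF t xy] by simp
qed

lemma Zp_lin: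
  assumes f: "lf f" and t: "t \<in> S"
  shows "lin_on sc S sc (Zp f t)"
  unfolding Zp_def
proof (rule linS_sw)
  fix x y assume xy: "(x, y) \<in> set (comult t)"
  have x: "x \<in> S" and y: "y \<in> S" using comult_in1[OF t xy] comult_in2[OF t xy] by auto
  show "lin_on sc S sc (\<lambda>p. sc (f (mult p x)) y)"
    unfolding lin_on_def
  proof (intro conjI ballI allI)
    fix p q assume "p \<in> S" "q \<in> S"
    then show "sc (f (mult (p + q) x)) y = sc (f (mult p x)) y + sc (f (mult q x)) y"
      using lin_add[OF lf_mult_l[OF f x]] y by (simp add: sc_add_l)
  next
    fix r p assume "p \<in> S"
    then show "sc (f (mult (sc r p) x)) y = sc r (sc (f (mult p x)) y)"
      using lin_sc[OF lf_mult_l[OF f x]] y by (simp add: sc_sc)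
  qed
next
  fix p x y assume xy: "(x, y) \<in> set (comult t)"
  show "sc (f (mult p x)) y \<in> S" using comult_in2[OF t xy] by simp
qed

lemma left_antipode:
  assumes f: "lf f"
    and RI: "\<And>a. a \<in> S \<Longrightarrow> sw comult a (\<lambda>x y. sc (f x) y) = sc (f a) one"
    and t: "t \<in> S" "\<And>b. b \<in> S \<Longrightarrow> f (mult t b) = counit b"
    and a: "a \<in> S"
  shows "sw comult a (\<lambda>x y. mult (Sm f t x) y) = sc (counit a) one"
proof (rule sep_eq)
  show "sw comult a (\<lambda>x y. mult (Sm f t x) y) \<in> S" using a t by (intro sw_comult_in1) auto
  show "sc (counit a) one \<in> S" by simp
  fix g assume g: "lf g"
  have step1: "g (mult (Sm f t x) y) = sw comult t (\<lambda>u v. f (mult u x) * g (mult v y))" if "x \<in> S" "y \<in> S" for x y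
  proof -
    have "mult (Sm f t x) y = sw comult t (\<lambda>u v. sc (f (mult u x)) (mult v y))"
      unfolding Sm_def using that t by (subst linS_sw_sc[OF mult_lin_l]) (auto dest: comult_inD)
    then have "g (mult (Sm f t x) y) = g (sw comult t (\<lambda>u v. sc (f (mult u x)) (mult v y)))" by simp
    also have "\<dots> = sw comult t (\<lambda>u v. f (mult u x) * g (mult v y))"
      using that t by (subst lf_sw_sc[OF g]) (auto dest: comult_inD)
    finally show ?thesis .
  qed
  have "g (sw comult a (\<lambda>x y. mult (Sm f t x) y)) = sw comult a (\<lambda>x y. g (mult (Sm f t x) y))"
    using a t by (intro lin_sw[OF g]) (auto dest: comult_inD)
  also have "\<dots> = sw comult a (\<lambda>x y. sw comult t (\<lambda>u v. f (mult u x) * g (mult v y)))"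
    using a by (intro sw_cong) (auto dest: comult_in simp: step1)
  also have "\<dots> = sw comult t (\<lambda>u v. sw comult a (\<lambda>x y. f (mult u x) * g (mult v y)))"
    by (rule sw_swap)
  also have "\<dots> = sw comult (mult t a) (\<lambda>p q. f p * g q)"
    using E_mult[OF t(1) a bilin_prod[OF f g]] by simp
  also have "\<dots> = g (sw comult (mult t a) (\<lambda>p q. sc (f p) q))"
    using t a by (subst lf_sw_sc[OF g]) (auto dest: comult_inD)
  also have "\<dots> = g (sc (f (mult t a)) one)" using RI t a by simp
  also have "\<dots> = counit a * g one" using t a g by (simp add: lin_sc)
  also have "\<dots> = g (sc (counit a) one)" using g by (simp add: lin_sc)
  finally show "g (sw comult a (\<lambda>x y. mult (Sm f t x) y)) = g (sc (counit a) one)" .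
qed

end


context ebialg
begin

lemma antipode_inverse:
  assumes f: "lf f"
    and RI: "\<And>a. a \<in> S \<Longrightarrow> sw comult a (\<lambda>x y. sc (f x) y) = sc (f a) one"
    and t: "t \<in> S" "\<And>b. b \<in> S \<Longrightarrow> f (mult t b) = counit b"
    and t': "t' \<in> S" "\<And>b. b \<in> S \<Longrightarrow> mult b t' = sc (counit b) t'" "f t' = 1"
    and c: "c \<in> S"
  shows "Zp f t' (Sm f t c) = c"
proof (rule sep_eq)
  show "Zp f t' (Sm f t c) \<in> S" using t' by simp
  show "c \<in> S" by fact
  fix g assume g: "lf g"
  let ?S = "Sm f t"
  have SmS: "\<And>x. ?S x \<in> S" using t by simp
  have Slin: "lin_on sc S sc ?S" by (rule Sm_lin[OF f t(1)])
  have e1: "g (Zp f t' (?S c)) = sw comult t' (\<lambda>x y. f (mult (?S c) x) * g y)"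
    unfolding Zp_def using t' by (subst lf_sw_sc[OF g]) (auto dest: comult_inD)
  have Sc: "?S c = sw comult c (\<lambda>c1 c2. sc (counit c2) (?S c1))"
  proof -
    have "?S c = ?S (sw comult c (\<lambda>c1 c2. sc (counit c2) c1))"
      using counit_r[OF c] by (simp add: sw_def)
    also have "\<dots> = sw comult c (\<lambda>c1 c2. sc (counit c2) (?S c1))"
      using c by (subst linS_sw_sc[OF Slin]) (auto dest: comult_inD)
    finally show ?thesis .
  qed
  have e2: "f (mult (?S c) x) = sw comult c (\<lambda>c1 c2. counit c2 * f (mult (?S c1) x))" if x: "x \<in> S" for x
  proof -
    have "f (mult (?S c) x) = f (mult (sw comult c (\<lambda>c1 c2. sc (counit c2) (?S c1))) x)"
      using Sc by simp
    also have "\<dots> = sw comult c (\<lambda>c1 c2. counit c2 * f (mult (?S c1) x))"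
      using c SmS by (subst lf_sw_sc[OF lf_mult_l[OF f x]]) auto
    finally show ?thesis .
  qed
  have e3: "g (Zp f t' (?S c)) = sw comult c (\<lambda>c1 c2. counit c2 * sw comult t' (\<lambda>x y. f (mult (?S c1) x) * g y))"
  proof -
    have "g (Zp f t' (?S c)) = sw comult t' (\<lambda>x y. sw comult c (\<lambda>c1 c2. counit c2 * f (mult (?S c1) x)) * g y)"
      unfolding e1 using t' by (intro sw_cong) (auto dest: comult_inD simp: e2)
    also have "\<dots> = sw comult t' (\<lambda>x y. sw comult c (\<lambda>c1 c2. counit c2 * (f (mult (?S c1) x) * g y)))"
      by (simp add: sw_mult_right mult.assoc)
    also have "\<dots> = sw comult c (\<lambda>c1 c2. sw comult t' (\<lambda>x y. counit c2 * (f (mult (?S c1) x) * g y)))"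
      by (rule sw_swap)
    also have "\<dots> = sw comult c (\<lambda>c1 c2. counit c2 * sw comult t' (\<lambda>x y. f (mult (?S c1) x) * g y))"
      by (simp add: sw_mult_left)
    finally show ?thesis .
  qed
  have e4: "counit b * sw comult t' B = sw comult b (\<lambda>d1 d2. sw comult t' (\<lambda>x y. B (mult d1 x) (mult d2 y)))"
    if b: "b \<in> S" and B: "bilin sc S B" for b B
  proof -
    have "counit b * sw comult t' B = sw comult t' (\<lambda>x y. B (sc (counit b) x) y)"
      unfolding sw_mult_left using t'(1)
      by (intro sw_cong) (auto dest: comult_inD simp: bilin_l_sc[OF B])
    also have "\<dots> = sw comult (sc (counit b) t') B" using E_hom[OF t'(1) B] by simp
    also have "\<dots> = sw comult (mult b t') B" using t'(2)[OF b] by simp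
    also have "\<dots> = sw comult b (\<lambda>d1 d2. sw comult t' (\<lambda>x y. B (mult d1 x) (mult d2 y)))"
      by (rule E_mult[OF b t'(1) B])
    finally show ?thesis .
  qed
  define C where "C p q r = sw comult t' (\<lambda>x y. f (mult (?S p) (mult q x)) * g (mult r y))" for p q r
  have e5: "g (Zp f t' (?S c)) = sw comult c (\<lambda>a1 a2. sw comult a2 (\<lambda>c1 c2. C a1 c1 c2))"
  proof -
    have "g (Zp f t' (?S c)) = sw comult c (\<lambda>c1 c2. sw comult c2 (\<lambda>d1 d2. sw comult t' (\<lambda>x y. f (mult (?S c1) (mult d1 x)) * g (mult d2 y))))"
      unfolding e3
    proof (rule sw_cong)
      fix c1 c2 assume cc: "(c1, c2) \<in> set (comult c)"
      then have c2: "c2 \<in> S" using c by (auto dest: comult_inD)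
      have B: "bilin sc S (\<lambda>x y. f (mult (?S c1) x) * g y)"
        by (rule bilin_prod[OF lf_mult_r[OF f SmS] g])
      show "counit c2 * sw comult t' (\<lambda>x y. f (mult (?S c1) x) * g y) =
          sw comult c2 (\<lambda>d1 d2. sw comult t' (\<lambda>x y. f (mult (?S c1) (mult d1 x)) * g (mult d2 y)))"
        using e4[OF c2 B] by simp
    qed
    then show ?thesis by (simp add: C_def)
  qed
  have triC: "trilin sc S C"
    unfolding trilin_def
  proof (intro conjI ballI)
    fix q r assume q: "q \<in> S" and r: "r \<in> S"
    show "lf (\<lambda>p. C p q r)" unfolding C_def
    proof (rule lfun_sw)
      fix x y assume xy: "(x, y) \<in> set (comult t')"
      then have x: "x \<in> S" using t' by (auto dest: comult_inD)
      have "lf (\<lambda>p. f (mult (?S p) (mult q x)))"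
        by (rule lin_comp[OF Slin SmS lf_mult_l[OF f]]) (use q x in simp)
      then show "lf (\<lambda>p. f (mult (?S p) (mult q x)) * g (mult r y))" by (rule lfun_mult_const)
    qed
  next
    fix p r assume p: "p \<in> S" and r: "r \<in> S"
    show "lf (\<lambda>q. C p q r)" unfolding C_def
    proof (rule lfun_sw)
      fix x y assume xy: "(x, y) \<in> set (comult t')"
      then have x: "x \<in> S" using t' by (auto dest: comult_inD)
      have "lf (\<lambda>q. f (mult (?S p) (mult q x)))"
        by (rule lin_comp[OF mult_lin_l[OF x] _ lf_mult_r[OF f SmS]]) (use x in simp)
      then show "lf (\<lambda>q. f (mult (?S p) (mult q x)) * g (mult r y))" by (rule lfun_mult_const)
    qed
  next
    fix p q assume p: "p \<in> S" and q: "q \<in> S"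
    show "lf (C p q)" unfolding C_def
    proof (rule lfun_sw)
      fix x y assume xy: "(x, y) \<in> set (comult t')"
      then have y: "y \<in> S" using t' by (auto dest: comult_inD)
      show "lf (\<lambda>r. f (mult (?S p) (mult q x)) * g (mult r y))"
        by (rule lfun_const_mult[OF lf_mult_l[OF g y]])
    qed
  qed
  have e6: "g (Zp f t' (?S c)) = sw comult c (\<lambda>a1 a2. sw comult a1 (\<lambda>b1 b2. C b1 b2 a2))"
    unfolding e5 using E_coassoc[OF c triC] by simp
  have e7: "sw comult a1 (\<lambda>b1 b2. C b1 b2 a2) = counit a1 * sw comult t' (\<lambda>x y. f x * g (mult a2 y))"
    if a1: "a1 \<in> S" and a2: "a2 \<in> S" for a1 a2
  proof -
    have inner: "sw comult a1 (\<lambda>b1 b2. f (mult (?S b1) (mult b2 x))) = counit a1 * f x" if x: "x \<in> S" for x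
    proof -
      have "sw comult a1 (\<lambda>b1 b2. f (mult (?S b1) (mult b2 x))) = sw comult a1 (\<lambda>b1 b2. f (mult (mult (?S b1) b2) x))"
      proof (rule sw_cong)
        fix b1 b2 assume "(b1, b2) \<in> set (comult a1)"
        then have b2: "b2 \<in> S" using a1 by (auto dest: comult_inD)
        show "f (mult (?S b1) (mult b2 x)) = f (mult (mult (?S b1) b2) x)"
          using assoc[OF SmS b2 x] by simp
      qed
      also have "\<dots> = f (mult (sw comult a1 (\<lambda>b1 b2. mult (?S b1) b2)) x)"
        using a1 by (subst lin_sw[OF lf_mult_l[OF f x]]) (auto dest: comult_inD simp: SmS)
      also have "\<dots> = f (mult (sc (counit a1) one) x)"
        using left_antipode[OF f RI t a1] by simp
      also have "\<dots> = counit a1 * f x" using x f by (simp add: mult_sc_l lin_sc)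
      finally show ?thesis .
    qed
    have "sw comult a1 (\<lambda>b1 b2. C b1 b2 a2) = sw comult t' (\<lambda>x y. sw comult a1 (\<lambda>b1 b2. f (mult (?S b1) (mult b2 x)) * g (mult a2 y)))"
      unfolding C_def by (rule sw_swap)
    also have "\<dots> = sw comult t' (\<lambda>x y. sw comult a1 (\<lambda>b1 b2. f (mult (?S b1) (mult b2 x))) * g (mult a2 y))"
      by (simp add: sw_mult_right)
    also have "\<dots> = sw comult t' (\<lambda>x y. counit a1 * (f x * g (mult a2 y)))"
      using t' by (intro sw_cong) (auto dest: comult_inD simp: inner)
    also have "\<dots> = counit a1 * sw comult t' (\<lambda>x y. f x * g (mult a2 y))"
      by (simp add: sw_mult_left)
    finally show ?thesis .
  qed
  have "g (Zp f t' (?S c)) = sw comult c (\<lambda>a1 a2. counit a1 * sw comult t' (\<lambda>x y. f x * g (mult a2 y)))"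
    unfolding e6 using c by (intro sw_cong) (auto dest: comult_inD simp: e7)
  also have "\<dots> = sw comult c (\<lambda>a1 a2. sw comult t' (\<lambda>x y. f x * (counit a1 * g (mult a2 y))))"
    by (simp add: sw_mult_left mult.left_commute)
  also have "\<dots> = sw comult t' (\<lambda>x y. sw comult c (\<lambda>a1 a2. f x * (counit a1 * g (mult a2 y))))"
    by (rule sw_swap)
  also have "\<dots> = sw comult t' (\<lambda>x y. f x * sw comult c (\<lambda>a1 a2. counit a1 * g (mult a2 y)))"
    by (simp add: sw_mult_left)
  also have "\<dots> = sw comult t' (\<lambda>x y. f x * g (mult c y))"
  proof (rule sw_cong)
    fix x y assume xy: "(x, y) \<in> set (comult t')"
    then have y: "y \<in> S" using t' by (auto dest: comult_inD)
    have "sw comult c (\<lambda>a1 a2. counit a1 * g (mult a2 y)) = g (mult (sw comult c (\<lambda>a1 a2. sc (counit a1) a2)) y)"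
      using c by (subst lf_sw_sc[OF lf_mult_l[OF g y]]) (auto dest: comult_inD)
    also have "\<dots> = g (mult c y)" using counit_l[OF c] by (simp add: sw_def)
    finally show "f x * sw comult c (\<lambda>a1 a2. counit a1 * g (mult a2 y)) = f x * g (mult c y)" by simp
  qed
  also have "\<dots> = g (mult c (sw comult t' (\<lambda>x y. sc (f x) y)))"
    using t' by (subst lf_sw_sc[OF lf_mult_r[OF g c]]) (auto dest: comult_inD)
  also have "\<dots> = g (mult c (sc (f t') one))" using RI t' by simp
  also have "\<dots> = g c" using t' c g by (simp add: mult_sc_r lin_sc)
  finally show "g (Zp f t' (Sm f t c)) = g c" .
qed

end


lemma (in ebialg) ebialg_op: "ebialg sc S (\<lambda>a b. mult b a) one comult counit"
  apply (rule ebialg.intro)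
   apply (rule modu_axioms)
  apply (rule ebialg_axioms.intro)
                    apply (rule mult_in; assumption)
                   apply (rule one_in)
                  apply (rule mult_lin_l; assumption)
                 apply (rule mult_lin_r; assumption)
                apply (simp add: assoc)
               apply (rule one_r; assumption)
              apply (rule one_l; assumption)
             apply (rule comult_in; assumption)
            apply (rule counit_lin)
           apply (rule counit_l; assumption)
          apply (rule counit_r; assumption)
         apply (simp add: counit_mult mult.commute)
        apply (rule counit_one)
       apply (rule E_add; assumption)
      apply (rule E_hom; assumption)
     apply (subst E_mult, assumption+, rule sw_swap)
    apply (rule E_coassoc; assumption)
   apply (rule E_one; assumption)
  apply (rule sep)
  done

locale fhalg = ebialg sc S mult one comult counit
  for sc :: "'k::comm_ring_1 \<Rightarrow> 'a::ab_group_add \<Rightarrow> 'a" and S mult one comult counit +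
  fixes f :: "'a \<Rightarrow> 'k" and xys :: "('a \<times> 'a) list"
  assumes f_lin: "lin_on sc S (\<lambda>r s. r * s) f"
    and xys_in: "(x, y) \<in> set xys \<Longrightarrow> x \<in> S \<and> y \<in> S"
    and F1: "a \<in> S \<Longrightarrow> (\<Sum>(x, y)\<leftarrow>xys. sc (f (mult y a)) x) = a"
    and F2: "a \<in> S \<Longrightarrow> (\<Sum>(x, y)\<leftarrow>xys. sc (f (mult a x)) y) = a"
    and RI: "a \<in> S \<Longrightarrow> sw comult a (\<lambda>x y. sc (f x) y) = sc (f a) one"
begin

lemma xys_in1: "(x, y) \<in> set xys \<Longrightarrow> x \<in> S" using xys_in by blast
lemma xys_in2: "(x, y) \<in> set xys \<Longrightarrow> y \<in> S" using xys_in by blast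

lemma lf_sum_sc':
  fixes L :: "('a \<times> 'a) list"
  assumes "lf G" "\<And>x y. (x, y) \<in> set L \<Longrightarrow> w x y \<in> S"
  shows "G (\<Sum>(x, y)\<leftarrow>L. sc (h x y) (w x y)) = (\<Sum>(x, y)\<leftarrow>L. h x y * G (w x y))"
  using lf_sw_sc[OF assms(1), of "\<lambda>_. L" undefined w h] assms(2) by (simp add: sw_def)

lemma linS_sum_sc':
  fixes L :: "('a \<times> 'a) list"
  assumes "lin_on sc S sc F" "\<And>x y. (x, y) \<in> set L \<Longrightarrow> w x y \<in> S"
  shows "F (\<Sum>(x, y)\<leftarrow>L. sc (h x y) (w x y)) = (\<Sum>(x, y)\<leftarrow>L. sc (h x y) (F (w x y)))"
  using linS_sw_sc[OF assms(1), of "\<lambda>_. L" undefined w h] assms(2) by (simp add: sw_def)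

lemma sum_in': fixes L :: "('a \<times> 'a) list" shows "(\<And>x y. (x, y) \<in> set L \<Longrightarrow> w x y \<in> S) \<Longrightarrow> (\<Sum>(x, y)\<leftarrow>L. w x y) \<in> S"
  using sw_in[of "\<lambda>_. L" undefined w] by (simp add: sw_def)

definition tt where "tt = (\<Sum>(x, y)\<leftarrow>xys. sc (counit x) y)"
definition tt' where "tt' = (\<Sum>(x, y)\<leftarrow>xys. sc (counit y) x)"

lemma tt_in[simp]: "tt \<in> S"
  unfolding tt_def by (rule sum_in') (auto dest: xys_in2)

lemma tt'_in[simp]: "tt' \<in> S"
  unfolding tt'_def by (rule sum_in') (auto dest: xys_in1)

lemma f_tt: "b \<in> S \<Longrightarrow> f (mult tt b) = counit b"
proof -
  assume b: "b \<in> S"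
  have "f (mult tt b) = (\<Sum>(x, y)\<leftarrow>xys. counit x * f (mult y b))"
    unfolding tt_def by (subst linS_sum_sc'[OF mult_lin_l[OF b]], use xys_in2 in blast,
        subst lf_sum_sc'[OF f_lin]) (auto dest: xys_in2 simp: b)
  also have "\<dots> = counit (\<Sum>(x, y)\<leftarrow>xys. sc (f (mult y b)) x)"
    by (subst lf_sum_sc'[OF counit_lin]) (auto dest: xys_in1 simp: mult.commute)
  also have "\<dots> = counit b" using F1[OF b] by simp
  finally show ?thesis .
qed

lemma f_tt': "b \<in> S \<Longrightarrow> f (mult b tt') = counit b"
proof -
  assume b: "b \<in> S"
  have "f (mult b tt') = (\<Sum>(x, y)\<leftarrow>xys. counit y * f (mult b x))"
    unfolding tt'_def by (subst linS_sum_sc'[OF mult_lin_r[OF b]], use xys_in1 in blast,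
        subst lf_sum_sc'[OF f_lin]) (auto dest: xys_in1 simp: b)
  also have "\<dots> = counit (\<Sum>(x, y)\<leftarrow>xys. sc (f (mult b x)) y)"
    by (subst lf_sum_sc'[OF counit_lin]) (auto dest: xys_in2 simp: mult.commute)
  also have "\<dots> = counit b" using F2[OF b] by simp
  finally show ?thesis .
qed

lemma tt_right: "b \<in> S \<Longrightarrow> mult tt b = sc (counit b) tt"
proof -
  assume b: "b \<in> S"
  have "mult tt b = (\<Sum>(x, y)\<leftarrow>xys. sc (f (mult (mult tt b) x)) y)" using F2[of "mult tt b"] b by simp
  also have "\<dots> = (\<Sum>(x, y)\<leftarrow>xys. sc (counit b) (sc (counit x) y))"
  proof (rule sum_list_map_cong', clarify)
    fix x y assume xy: "(x, y) \<in> set xys"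
    have x: "x \<in> S" and y: "y \<in> S" using xys_in[OF xy] by auto
    have "f (mult (mult tt b) x) = counit b * counit x"
      using b x by (simp add: assoc f_tt counit_mult)
    then show "sc (f (mult (mult tt b) x)) y = sc (counit b) (sc (counit x) y)" using y by (simp add: sc_sc)
  qed
  also have "\<dots> = sc (counit b) tt"
  proof -
    have lsc: "lin_on sc S sc (sc (counit b))" by (simp add: lin_on_def sc_add_r sc_sc mult.commute)
    have "sc (counit b) tt = (\<Sum>(x, y)\<leftarrow>xys. (sc (counit x) (sc (counit b) y)))"
      unfolding tt_def by (rule linS_sum_sc'[OF lsc]) (auto dest: xys_in2)
    also have "\<dots> = (\<Sum>(x, y)\<leftarrow>xys. sc (counit b) (sc (counit x) y))"
      by (rule sum_list_map_cong') (auto dest: xys_in2 simp: sc_sc mult.commute)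
    finally show ?thesis by simp
  qed
  finally show ?thesis .
qed

lemma tt'_left: "b \<in> S \<Longrightarrow> mult b tt' = sc (counit b) tt'"
proof -
  assume b: "b \<in> S"
  have "mult b tt' = (\<Sum>(x, y)\<leftarrow>xys. sc (f (mult y (mult b tt'))) x)" using F1[of "mult b tt'"] b by simp
  also have "\<dots> = (\<Sum>(x, y)\<leftarrow>xys. sc (counit b) (sc (counit y) x))"
  proof (rule sum_list_map_cong', clarify)
    fix x y assume xy: "(x, y) \<in> set xys"
    have x: "x \<in> S" and y: "y \<in> S" using xys_in[OF xy] by auto
    have "f (mult y (mult b tt')) = counit b * counit y"
      using b y by (simp add: assoc[symmetric] f_tt' counit_mult mult.commute)
    then show "sc (f (mult y (mult b tt'))) x = sc (counit b) (sc (counit y) x)" using x by (simp add: sc_sc)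
  qed
  also have "\<dots> = sc (counit b) tt'"
  proof -
    have lsc: "lin_on sc S sc (sc (counit b))" by (simp add: lin_on_def sc_add_r sc_sc mult.commute)
    have "sc (counit b) tt' = (\<Sum>(x, y)\<leftarrow>xys. (sc (counit y) (sc (counit b) x)))"
      unfolding tt'_def by (rule linS_sum_sc'[OF lsc]) (auto dest: xys_in1)
    also have "\<dots> = (\<Sum>(x, y)\<leftarrow>xys. sc (counit b) (sc (counit y) x))"
      by (rule sum_list_map_cong') (auto dest: xys_in1 simp: sc_sc mult.commute)
    finally show ?thesis by simp
  qed
  finally show ?thesis .
qed

lemma f_tt_one: "f tt = 1" using f_tt[of one] by (simp add: counit_one)
lemma f_tt'_one: "f tt' = 1" using f_tt'[of one] by (simp add: counit_one)

lemma RI': "\<And>a. a \<in> S \<Longrightarrow> sw comult a (\<lambda>x y. sc (f x) y) = sc (f a) one" using RI by blast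

lemma ZS: "c \<in> S \<Longrightarrow> Zp f tt' (Sm f tt c) = c"
  by (rule antipode_inverse[OF f_lin RI' tt_in f_tt tt'_in tt'_left f_tt'_one])

lemma SZ: "c \<in> S \<Longrightarrow> Sm f tt (Zp f tt' c) = c"
proof -
  assume c: "c \<in> S"
  interpret op: ebialg sc S "\<lambda>a b. mult b a" one comult counit by (rule ebialg_op)
  have "op.Zp f tt (op.Sm f tt' c) = c"
    by (rule op.antipode_inverse[OF f_lin RI' tt'_in _ tt_in _ f_tt_one c])
       (auto simp: f_tt' tt_right)
  then show ?thesis by (simp add: op.Sm_def op.Zp_def Sm_def Zp_def)
qed

end


section \<open>Proving tensor equalities from coordinates\<close>

context modu
begin

abbreviation R where "R n \<equiv> tensor_rel sc S n"

lemma R_add: "p \<in> R n \<Longrightarrow> q \<in> R n \<Longrightarrow> (\<lambda>v. p v + q v) \<in> R n"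
  by (rule tensor_rel.add)

lemma R_smult: "p \<in> R n \<Longrightarrow> (\<lambda>v. r * p v) \<in> R n"
  by (rule tensor_rel.smult)

lemma R_eq: "p \<in> R n \<Longrightarrow> (\<And>v. p v = q v) \<Longrightarrow> q \<in> R n"
proof -
  assume "p \<in> R n" "\<And>v. p v = q v"
  then have "p = q" by (simp add: fun_eq_iff)
  with \<open>p \<in> R n\<close> show ?thesis by simp
qed

lemma R_diff: "p \<in> R n \<Longrightarrow> q \<in> R n \<Longrightarrow> (\<lambda>v. p v - q v) \<in> R n"
proof -
  assume "p \<in> R n" "q \<in> R n"
  then have "(\<lambda>v. p v + (\<lambda>v. (-1) * q v) v) \<in> R n" by (intro R_add R_smult)
  then show ?thesis by (rule R_eq) simp
qed

lemma R_sum: "(\<And>i. i \<in> set js \<Longrightarrow> P i \<in> R n) \<Longrightarrow> (\<lambda>v. \<Sum>i\<leftarrow>js. P i v) \<in> R n"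
proof (induction js)
  case Nil
  then show ?case using tensor_rel.zero by simp
next
  case (Cons i js)
  then have "(\<lambda>v. P i v + (\<lambda>v. \<Sum>i\<leftarrow>js. P i v) v) \<in> R n" by (intro R_add) auto
  then show ?case by simp
qed

lemma EXP1:
  assumes len: "length us + Suc (length vs) = n" and us: "set us \<subseteq> S" and vs: "set vs \<subseteq> S"
    and xs: "\<And>i. i \<in> set L \<Longrightarrow> x i \<in> S"
  shows "(\<lambda>v. delta (us @ (\<Sum>i\<leftarrow>L. sc (c i) (x i)) # vs) v - (\<Sum>i\<leftarrow>L. c i * delta (us @ x i # vs) v)) \<in> R n"
  using xs
proof (induction L)
  case Nil
  have "(\<lambda>v. delta (us @ sc 0 0 # vs) v - 0 * delta (us @ 0 # vs) v) \<in> R n"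
    by (rule tensor_rel.homog[OF len us vs]) simp
  then show ?case by (rule R_eq) simp
next
  case (Cons i L)
  let ?X = "\<Sum>i\<leftarrow>L. sc (c i) (x i)"
  have xi: "x i \<in> S" using Cons.prems by simp
  have X: "?X \<in> S" using Cons.prems by (intro sum_list_map_in) auto
  have A: "(\<lambda>v. delta (us @ (sc (c i) (x i) + ?X) # vs) v - delta (us @ sc (c i) (x i) # vs) v - delta (us @ ?X # vs) v) \<in> R n"
    by (rule tensor_rel.additive[OF len us vs]) (use xi X in simp_all)
  have B: "(\<lambda>v. delta (us @ sc (c i) (x i) # vs) v - c i * delta (us @ x i # vs) v) \<in> R n"
    by (rule tensor_rel.homog[OF len us vs xi])
  have C: "(\<lambda>v. delta (us @ ?X # vs) v - (\<Sum>i\<leftarrow>L. c i * delta (us @ x i # vs) v)) \<in> R n"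
    using Cons by simp
  have "(\<lambda>v. (\<lambda>v. (\<lambda>v. delta (us @ (sc (c i) (x i) + ?X) # vs) v - delta (us @ sc (c i) (x i) # vs) v - delta (us @ ?X # vs) v) v
      + (\<lambda>v. delta (us @ sc (c i) (x i) # vs) v - c i * delta (us @ x i # vs) v) v) v
      + (\<lambda>v. delta (us @ ?X # vs) v - (\<Sum>i\<leftarrow>L. c i * delta (us @ x i # vs) v)) v) \<in> R n"
    by (intro R_add A B C)
  then show ?case by (rule R_eq) (simp add: algebra_simps)
qed

lemma delta_count: "of_nat (count_list xs v) = (\<Sum>w\<leftarrow>xs. delta w v :: 'k)"
  by (induction xs) (auto simp: delta_def)

lemma CT_general:
  assumes E: "\<And>w. w \<in> set xs \<union> set ys \<Longrightarrow> (\<lambda>v. delta w v - Xp w v) \<in> R n"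
    and Z: "\<And>v. (\<Sum>w\<leftarrow>xs. Xp w v) = (\<Sum>w\<leftarrow>ys. Xp w v)"
    and W: "\<forall>w \<in> set xs \<union> set ys. length w = n \<and> set w \<subseteq> S"
  shows "tensor_eq sc S n xs ys"
proof -
  have "(\<lambda>v. (\<lambda>v. \<Sum>w\<leftarrow>xs. delta w v - Xp w v) v - (\<lambda>v. \<Sum>w\<leftarrow>ys. delta w v - Xp w v) v) \<in> R n"
    by (rule R_diff; rule R_sum) (use E in auto)
  then have "(\<lambda>v. (of_nat (count_list xs v) :: 'k) - of_nat (count_list ys v)) \<in> R n"
    by (rule R_eq) (simp add: delta_count sum_list_subtractf Z)
  with W show ?thesis by (simp add: tensor_eq_def)
qed

end


lemma swap_sum3:
  fixes F :: "'w \<Rightarrow> 'p \<Rightarrow> 'p \<Rightarrow> 'k::comm_ring_1"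
  shows "(\<Sum>w\<leftarrow>xs. \<Sum>p\<leftarrow>L. \<Sum>q\<leftarrow>L. F w p q * G p q) = (\<Sum>p\<leftarrow>L. \<Sum>q\<leftarrow>L. (\<Sum>w\<leftarrow>xs. F w p q) * G p q)"
  by (induction xs) (simp_all add: sum_list_addf distrib_right)

lemma swap_sum4:
  fixes F :: "'w \<Rightarrow> 'p \<Rightarrow> 'p \<Rightarrow> 'p \<Rightarrow> 'k::comm_ring_1"
  shows "(\<Sum>w\<leftarrow>xs. \<Sum>p\<leftarrow>L. \<Sum>q\<leftarrow>L. \<Sum>s\<leftarrow>L. F w p q s * G p q s) = (\<Sum>p\<leftarrow>L. \<Sum>q\<leftarrow>L. \<Sum>s\<leftarrow>L. (\<Sum>w\<leftarrow>xs. F w p q s) * G p q s)"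
  by (induction xs) (simp_all add: sum_list_addf distrib_right)

lemma len2_eq: "length w = 2 \<Longrightarrow> w = [w ! 0, w ! Suc 0]"
  by (cases w; cases "tl w") (auto simp: numeral_2_eq_2)

lemma len3_eq: "length w = 3 \<Longrightarrow> w = [w ! 0, w ! Suc 0, w ! Suc (Suc 0)]"
  by (cases w; cases "tl w"; cases "tl (tl w)") (auto simp: numeral_3_eq_3)

context modu
begin

lemma expand_pos:
  assumes L: "\<forall>(\<phi>, b)\<in>set L. lin_on sc S (\<lambda>r s. r * s) \<phi> \<and> b \<in> S" "\<forall>x\<in>S. (\<Sum>(\<phi>, b)\<leftarrow>L. sc (\<phi> x) b) = x"
    and len: "length us + Suc (length vs) = n" and us: "set us \<subseteq> S" and vs: "set vs \<subseteq> S" and u: "u \<in> S"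
  shows "(\<lambda>v. delta (us @ u # vs) v - (\<Sum>p\<leftarrow>L. fst p u * delta (us @ snd p # vs) v)) \<in> R n"
proof -
  have "(\<lambda>v. delta (us @ (\<Sum>p\<leftarrow>L. sc (fst p u) (snd p)) # vs) v - (\<Sum>p\<leftarrow>L. fst p u * delta (us @ snd p # vs) v)) \<in> R n"
    by (rule EXP1[OF len us vs]) (use L(1) in auto)
  moreover have "(\<Sum>p\<leftarrow>L. sc (fst p u) (snd p)) = u" using L(2) u by (simp add: split_def)
  ultimately show ?thesis by simp
qed

lemma CT2:
  assumes L: "\<forall>(\<phi>, b)\<in>set L. lin_on sc S (\<lambda>r s. r * s) \<phi> \<and> b \<in> S" "\<forall>x\<in>S. (\<Sum>(\<phi>, b)\<leftarrow>L. sc (\<phi> x) b) = x"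
    and W: "\<forall>w\<in>set xs \<union> set ys. length w = 2 \<and> set w \<subseteq> S"
    and C: "\<And>p q. p \<in> set L \<Longrightarrow> q \<in> set L \<Longrightarrow>
        (\<Sum>w\<leftarrow>xs. fst p (w ! 0) * fst q (w ! Suc 0)) = (\<Sum>w\<leftarrow>ys. fst p (w ! 0) * fst q (w ! Suc 0))"
  shows "tensor_eq sc S 2 xs ys"
proof (rule CT_general[where Xp = "\<lambda>w v. \<Sum>p\<leftarrow>L. \<Sum>q\<leftarrow>L. fst p (w ! 0) * fst q (w ! Suc 0) * delta [snd p, snd q] v"])
  show "\<forall>w\<in>set xs \<union> set ys. length w = 2 \<and> set w \<subseteq> S" by (rule W)
next
  fix v
  show "(\<Sum>w\<leftarrow>xs. \<Sum>p\<leftarrow>L. \<Sum>q\<leftarrow>L. fst p (w ! 0) * fst q (w ! Suc 0) * delta [snd p, snd q] v) =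
        (\<Sum>w\<leftarrow>ys. \<Sum>p\<leftarrow>L. \<Sum>q\<leftarrow>L. fst p (w ! 0) * fst q (w ! Suc 0) * delta [snd p, snd q] v)"
    unfolding swap_sum3 using C by (intro sum_list_map_cong') simp
next
  fix w assume "w \<in> set xs \<union> set ys"
  then have lw: "length w = 2" and sw: "set w \<subseteq> S" using W by auto
  define u v where "u = w ! 0" and "v = w ! Suc 0"
  have w: "w = [u, v]" unfolding u_def v_def by (rule len2_eq[OF lw])
  have uS: "u \<in> S" and vS: "v \<in> S" using sw w by auto
  have bS: "p \<in> set L \<Longrightarrow> snd p \<in> S" for p using L(1) by auto
  have A: "(\<lambda>z. delta ([] @ u # [v]) z - (\<Sum>p\<leftarrow>L. fst p u * delta ([] @ snd p # [v]) z)) \<in> R 2"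
    by (rule expand_pos[OF L]) (use uS vS in auto)
  have B: "(\<lambda>z. \<Sum>p\<leftarrow>L. (\<lambda>z. fst p u * (\<lambda>z. delta ([snd p] @ v # []) z - (\<Sum>q\<leftarrow>L. fst q v * delta ([snd p] @ snd q # []) z)) z) z) \<in> R 2"
    by (rule R_sum, rule R_smult, rule expand_pos[OF L]) (use vS bS in auto)
  have "(\<lambda>z. (\<lambda>z. delta ([] @ u # [v]) z - (\<Sum>p\<leftarrow>L. fst p u * delta ([] @ snd p # [v]) z)) z +
      (\<lambda>z. \<Sum>p\<leftarrow>L. (\<lambda>z. fst p u * (\<lambda>z. delta ([snd p] @ v # []) z - (\<Sum>q\<leftarrow>L. fst q v * delta ([snd p] @ snd q # []) z)) z) z) z) \<in> R 2"
    by (rule R_add[OF A B])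
  then show "(\<lambda>z. delta w z - (\<Sum>p\<leftarrow>L. \<Sum>q\<leftarrow>L. fst p (w ! 0) * fst q (w ! Suc 0) * delta [snd p, snd q] z)) \<in> R 2"
    by (rule R_eq) (simp add: w right_diff_distrib sum_list_subtractf sum_list_const_mult mult.assoc)
qed

lemma CT3:
  assumes L: "\<forall>(\<phi>, b)\<in>set L. lin_on sc S (\<lambda>r s. r * s) \<phi> \<and> b \<in> S" "\<forall>x\<in>S. (\<Sum>(\<phi>, b)\<leftarrow>L. sc (\<phi> x) b) = x"
    and W: "\<forall>w\<in>set xs \<union> set ys. length w = 3 \<and> set w \<subseteq> S"
    and C: "\<And>p q s. p \<in> set L \<Longrightarrow> q \<in> set L \<Longrightarrow> s \<in> set L \<Longrightarrow>
        (\<Sum>w\<leftarrow>xs. fst p (w ! 0) * fst q (w ! Suc 0) * fst s (w ! Suc (Suc 0))) =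
        (\<Sum>w\<leftarrow>ys. fst p (w ! 0) * fst q (w ! Suc 0) * fst s (w ! Suc (Suc 0)))"
  shows "tensor_eq sc S 3 xs ys"
proof (rule CT_general[where Xp = "\<lambda>w v. \<Sum>p\<leftarrow>L. \<Sum>q\<leftarrow>L. \<Sum>s\<leftarrow>L. fst p (w ! 0) * fst q (w ! Suc 0) * fst s (w ! Suc (Suc 0)) * delta [snd p, snd q, snd s] v"])
  show "\<forall>w\<in>set xs \<union> set ys. length w = 3 \<and> set w \<subseteq> S" by (rule W)
next
  fix v
  show "(\<Sum>w\<leftarrow>xs. \<Sum>p\<leftarrow>L. \<Sum>q\<leftarrow>L. \<Sum>s\<leftarrow>L. fst p (w ! 0) * fst q (w ! Suc 0) * fst s (w ! Suc (Suc 0)) * delta [snd p, snd q, snd s] v) =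
        (\<Sum>w\<leftarrow>ys. \<Sum>p\<leftarrow>L. \<Sum>q\<leftarrow>L. \<Sum>s\<leftarrow>L. fst p (w ! 0) * fst q (w ! Suc 0) * fst s (w ! Suc (Suc 0)) * delta [snd p, snd q, snd s] v)"
    unfolding swap_sum4 using C by (intro sum_list_map_cong') simp
next
  fix w assume "w \<in> set xs \<union> set ys"
  then have lw: "length w = 3" and sw: "set w \<subseteq> S" using W by auto
  define u v x where "u = w ! 0" and "v = w ! Suc 0" and "x = w ! Suc (Suc 0)"
  have w: "w = [u, v, x]" unfolding u_def v_def x_def by (rule len3_eq[OF lw])
  have uS: "u \<in> S" and vS: "v \<in> S" and xS: "x \<in> S" using sw w by auto
  have bS: "p \<in> set L \<Longrightarrow> snd p \<in> S" for p using L(1) by auto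
  have A: "(\<lambda>z. delta ([] @ u # [v, x]) z - (\<Sum>p\<leftarrow>L. fst p u * delta ([] @ snd p # [v, x]) z)) \<in> R 3"
    by (rule expand_pos[OF L]) (use uS vS xS in auto)
  have B: "(\<lambda>z. \<Sum>p\<leftarrow>L. (\<lambda>z. fst p u * (\<lambda>z. delta ([snd p] @ v # [x]) z - (\<Sum>q\<leftarrow>L. fst q v * delta ([snd p] @ snd q # [x]) z)) z) z) \<in> R 3"
    by (rule R_sum, rule R_smult, rule expand_pos[OF L]) (use vS xS bS in auto)
  have C': "(\<lambda>z. \<Sum>p\<leftarrow>L. (\<lambda>z. fst p u * (\<lambda>z. \<Sum>q\<leftarrow>L. (\<lambda>z. fst q v * (\<lambda>z. delta ([snd p, snd q] @ x # []) z - (\<Sum>s\<leftarrow>L. fst s x * delta ([snd p, snd q] @ snd s # []) z)) z) z) z) z) \<in> R 3"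
    by (rule R_sum, rule R_smult, rule R_sum, rule R_smult, rule expand_pos[OF L]) (use xS bS in auto)
  have "(\<lambda>z. (\<lambda>z. (\<lambda>z. delta ([] @ u # [v, x]) z - (\<Sum>p\<leftarrow>L. fst p u * delta ([] @ snd p # [v, x]) z)) z +
      (\<lambda>z. \<Sum>p\<leftarrow>L. (\<lambda>z. fst p u * (\<lambda>z. delta ([snd p] @ v # [x]) z - (\<Sum>q\<leftarrow>L. fst q v * delta ([snd p] @ snd q # [x]) z)) z) z) z) z +
      (\<lambda>z. \<Sum>p\<leftarrow>L. (\<lambda>z. fst p u * (\<lambda>z. \<Sum>q\<leftarrow>L. (\<lambda>z. fst q v * (\<lambda>z. delta ([snd p, snd q] @ x # []) z - (\<Sum>s\<leftarrow>L. fst s x * delta ([snd p, snd q] @ snd s # []) z)) z) z) z) z) z) \<in> R 3"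
    by (rule R_add[OF R_add[OF A B] C'])
  then show "(\<lambda>z. delta w z - (\<Sum>p\<leftarrow>L. \<Sum>q\<leftarrow>L. \<Sum>s\<leftarrow>L. fst p (w ! 0) * fst q (w ! Suc 0) * fst s (w ! Suc (Suc 0)) * delta [snd p, snd q, snd s] z)) \<in> R 3"
    by (rule R_eq) (simp add: w right_diff_distrib sum_list_subtractf sum_list_const_mult mult.assoc)
qed

end


lemma sum_list_map_fun_apply: "(\<Sum>p\<leftarrow>L. F p) x = (\<Sum>p\<leftarrow>L. F p x)"
  for F :: "'p \<Rightarrow> 'x \<Rightarrow> 'y::comm_monoid_add"
  by (induction L) simp_all

lemma (in modu) lin_list_sc:
  assumes "lin_on sc S sb F" "\<And>p. p \<in> set L \<Longrightarrow> w p \<in> S"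
  shows "F (\<Sum>p\<leftarrow>L. sc (h p) (w p)) = (\<Sum>p\<leftarrow>L. sb (h p) (F (w p)))"
  using assms(2)
proof (induction L)
  case Nil then show ?case using lin_zero[OF assms(1)] by simp
next
  case (Cons p L)
  have "(\<Sum>p\<leftarrow>L. sc (h p) (w p)) \<in> S" using Cons.prems by (intro sum_list_map_in) auto
  then show ?case using Cons lin_add[OF assms(1)] lin_sc[OF assms(1)] by simp
qed

locale hU = ebialg sc UNIV mult one comult counit
  for sc :: "'k::comm_ring_1 \<Rightarrow> 'a::ab_group_add \<Rightarrow> 'a" and mult one comult counit
begin

abbreviation D where "D \<equiv> dual_carrier sc (UNIV :: 'a set)"
abbreviation dm where "dm \<equiv> dual_mult (UNIV :: 'a set) comult"
abbreviation dc where "dc \<equiv> dual_comult sc (UNIV :: 'a set) mult"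

lemma D_iff: "g \<in> D \<longleftrightarrow> lf g" by (simp add: dual_carrier_def)

lemma D_add: "g \<in> D \<Longrightarrow> g (x + y) = g x + g y" by (simp add: D_iff lin_on_def)
lemma D_sc: "g \<in> D \<Longrightarrow> g (sc r x) = r * g x" by (simp add: D_iff lin_on_def)

lemma dm_apply: "dm g h x = sw comult x (\<lambda>x1 x2. g x1 * h x2)"
  by (simp add: dual_mult_def sw_def)

lemma done_eq: "dual_one (UNIV :: 'a set) counit = counit" by (simp add: dual_one_def fun_eq_iff)

lemma dmod: "module_on dual_scale D"
  unfolding module_on_def
  by (auto simp: D_iff lin_on_def dual_scale_def fun_eq_iff algebra_simps)

lemma lf_DB: "(\<mu>, m) \<in> set DB \<Longrightarrow> \<mu> \<in> D" by (simp add: D_iff DB_lin)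

lemma D_expand: "g \<in> D \<Longrightarrow> g x = (\<Sum>(\<mu>, m)\<leftarrow>DB. g m * \<mu> x)"
proof -
  assume g: "g \<in> D"
  have "g x = g (\<Sum>(\<mu>, m)\<leftarrow>DB. sc (\<mu> x) m)" using DB_expand[of x] by simp
  also have "\<dots> = (\<Sum>(\<mu>, m)\<leftarrow>DB. \<mu> x * g m)"
    using lin_list_sc[of "\<lambda>r s. r * s" g DB snd "\<lambda>p. fst p x"] g
    by (simp add: D_iff split_def)
  finally show ?thesis by (simp add: mult.commute)
qed

lemma D_expand_fun:
  assumes g: "g \<in> D"
  shows "(\<Sum>(\<mu>, m)\<leftarrow>DB. dual_scale (g m) \<mu>) = g"
proof (rule ext)
  fix x
  have "(\<Sum>(\<mu>, m)\<leftarrow>DB. dual_scale (g m) \<mu>) x = (\<Sum>p\<leftarrow>DB. (case p of (\<mu>, m) \<Rightarrow> dual_scale (g m) \<mu>) x)"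
    by (rule sum_list_map_fun_apply)
  also have "\<dots> = (\<Sum>(\<mu>, m)\<leftarrow>DB. g m * \<mu> x)"
    by (rule sum_list_map_cong') (auto simp: dual_scale_def)
  also have "\<dots> = g x" by (rule D_expand[OF g, symmetric])
  finally show "(\<Sum>(\<mu>, m)\<leftarrow>DB. dual_scale (g m) \<mu>) x = g x" .
qed

lemma sep_D: "x = y" if "\<And>\<mu> m. (\<mu>, m) \<in> set DB \<Longrightarrow> \<mu> x = \<mu> y"
proof -
  have "x = (\<Sum>(\<mu>, m)\<leftarrow>DB. sc (\<mu> x) m)" using DB_expand[of x] by simp
  also have "\<dots> = (\<Sum>(\<mu>, m)\<leftarrow>DB. sc (\<mu> y) m)"
  proof (rule sum_list_map_cong', clarify)
    fix \<mu> m assume "(\<mu>, m) \<in> set DB"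
    then show "sc (\<mu> x) m = sc (\<mu> y) m" using that[of \<mu> m] by simp
  qed
  also have "\<dots> = y" using DB_expand[of y] by simp
  finally show ?thesis .
qed

definition LD where "LD = map (\<lambda>(\<mu>, m). ((\<lambda>g :: 'a \<Rightarrow> 'k. g m), \<mu>)) DB"

lemma sum_map_pairs: "(\<Sum>(\<phi>, b)\<leftarrow>map (\<lambda>(\<mu>, m). (F \<mu> m, G \<mu> m)) L. H \<phi> b) = (\<Sum>(\<mu>, m)\<leftarrow>L. H (F \<mu> m) (G \<mu> m))"
  by (induction L) auto

lemma LD_basis:
  "\<forall>(\<phi>, b)\<in>set LD. lin_on dual_scale D (\<lambda>r s. r * s) \<phi> \<and> b \<in> D"
  "\<forall>x\<in>D. (\<Sum>(\<phi>, b)\<leftarrow>LD. dual_scale (\<phi> x) b) = x"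
proof -
  have ev: "lin_on dual_scale D (\<lambda>r s. r * s) (\<lambda>g. g m)" for m
    by (simp add: lin_on_def dual_scale_def)
  show "\<forall>(\<phi>, b)\<in>set LD. lin_on dual_scale D (\<lambda>r s. r * s) \<phi> \<and> b \<in> D"
    unfolding LD_def using ev lf_DB by fastforce
  show "\<forall>x\<in>D. (\<Sum>(\<phi>, b)\<leftarrow>LD. dual_scale (\<phi> x) b) = x"
  proof
    fix x assume x: "x \<in> D"
    have "(\<Sum>(\<phi>, b)\<leftarrow>LD. dual_scale (\<phi> x) b) = (\<Sum>(\<mu>, m)\<leftarrow>DB. dual_scale (x m) \<mu>)"
      unfolding LD_def by (rule sum_map_pairs)
    also have "\<dots> = x" by (rule D_expand_fun[OF x])
    finally show "(\<Sum>(\<phi>, b)\<leftarrow>LD. dual_scale (\<phi> x) b) = x" .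
  qed
qed

lemma dc_exists: "g \<in> D \<Longrightarrow> \<exists>L. (\<forall>(u, v)\<in>set L. u \<in> D \<and> v \<in> D) \<and>
      (\<forall>a\<in>UNIV. \<forall>b\<in>UNIV. (\<Sum>(u, v)\<leftarrow>L. u a * v b) = g (mult a b))"
proof -
  assume g: "g \<in> D"
  let ?L = "map (\<lambda>(\<mu>, m). (\<mu>, \<lambda>b. g (mult m b))) DB"
  show ?thesis
  proof (intro exI[of _ ?L] conjI ballI)
    fix p assume "p \<in> set ?L"
    then show "case p of (u, v) \<Rightarrow> u \<in> D \<and> v \<in> D"
      using g by (auto simp: D_iff DB_lin lf_mult_r)
  next
    fix a b :: 'a
    have "g (mult a b) = g (mult (\<Sum>(\<mu>, m)\<leftarrow>DB. sc (\<mu> a) m) b)" using DB_expand[of a] by simp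
    also have "\<dots> = (\<Sum>(\<mu>, m)\<leftarrow>DB. \<mu> a * g (mult m b))"
      using lin_list_sc[of "\<lambda>r s. r * s" "\<lambda>z. g (mult z b)" DB snd "\<lambda>p. fst p a"] g
      by (simp add: D_iff lf_mult_l split_def)
    finally show "(\<Sum>(u, v)\<leftarrow>?L. u a * v b) = g (mult a b)" by (simp add: o_def split_def)
  qed
qed

lemma dc_spec:
  assumes "g \<in> D"
  shows "\<forall>(u, v)\<in>set (dc g). u \<in> D \<and> v \<in> D"
    and "\<And>a b. (\<Sum>(u, v)\<leftarrow>dc g. u a * v b) = g (mult a b)"
proof -
  have "(\<forall>(u, v)\<in>set (dc g). u \<in> D \<and> v \<in> D) \<and>
      (\<forall>a\<in>UNIV. \<forall>b\<in>UNIV. (\<Sum>(u, v)\<leftarrow>dc g. u a * v b) = g (mult a b))"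
    unfolding dual_comult_def by (rule someI_ex[OF dc_exists[OF assms]])
  then show "\<forall>(u, v)\<in>set (dc g). u \<in> D \<and> v \<in> D" and "\<And>a b. (\<Sum>(u, v)\<leftarrow>dc g. u a * v b) = g (mult a b)"
    by auto
qed

lemma dc_in1: "g \<in> D \<Longrightarrow> (u, v) \<in> set (dc g) \<Longrightarrow> u \<in> D" using dc_spec(1) by blast
lemma dc_in2: "g \<in> D \<Longrightarrow> (u, v) \<in> set (dc g) \<Longrightarrow> v \<in> D" using dc_spec(1) by blast

lemma dm_in: "g \<in> D \<Longrightarrow> h \<in> D \<Longrightarrow> dm g h \<in> D"
proof -
  assume g: "g \<in> D" and h: "h \<in> D"
  have B: "bilin sc UNIV (\<lambda>x y. g x * h y)" using g h by (intro bilin_prod) (simp_all add: D_iff)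
  show ?thesis unfolding D_iff lin_on_def dm_apply
    using E_add[OF _ _ B] E_hom[OF _ B] B
    by (simp add: bilin_l_sc[OF B] sw_mult_left)
qed

end


lemma trilin_prod: "lin_on sc S (\<lambda>r s. r * s) A \<Longrightarrow> lin_on sc S (\<lambda>r s. r * s) B \<Longrightarrow> lin_on sc S (\<lambda>r s. r * s) C \<Longrightarrow>
    trilin sc S (\<lambda>p q r. A p * B q * (C r :: 'k::comm_ring_1))"
  unfolding trilin_def by (simp add: lfun_mult_const lfun_const_mult)

lemma sum_map3a:
  fixes M :: "(('a \<Rightarrow> 'k::comm_ring_1) \<times> ('a \<Rightarrow> 'k)) list"
  shows "(\<Sum>w\<leftarrow>map (\<lambda>(b1, b2). [b1, b2, c]) M. (w ! 0) x * (w ! Suc 0) y * (w ! Suc (Suc 0)) z) = (\<Sum>(b1, b2)\<leftarrow>M. b1 x * b2 y) * c z"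
  by (induction M) (auto simp: distrib_right)

lemma sum_map3b:
  fixes M :: "(('a \<Rightarrow> 'k::comm_ring_1) \<times> ('a \<Rightarrow> 'k)) list"
  shows "(\<Sum>w\<leftarrow>map (\<lambda>(c1, c2). [a, c1, c2]) M. (w ! 0) x * (w ! Suc 0) y * (w ! Suc (Suc 0)) z) = a x * (\<Sum>(c1, c2)\<leftarrow>M. c1 y * c2 z)"
  by (induction M) (auto simp: distrib_left mult.assoc)

lemma sum_concat3a:
  fixes L :: "(('a \<Rightarrow> 'k::comm_ring_1) \<times> ('a \<Rightarrow> 'k)) list"
  shows "(\<Sum>w\<leftarrow>concat (map (\<lambda>(a1, a2). map (\<lambda>(b1, b2). [b1, b2, a2]) (G a1)) L). (w ! 0) x * (w ! Suc 0) y * (w ! Suc (Suc 0)) z)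
    = (\<Sum>(a1, a2)\<leftarrow>L. (\<Sum>(b1, b2)\<leftarrow>G a1. b1 x * b2 y) * a2 z)"
  by (induction L) (auto simp: sum_map3a simp del: map_map)

lemma sum_concat3b:
  fixes L :: "(('a \<Rightarrow> 'k::comm_ring_1) \<times> ('a \<Rightarrow> 'k)) list"
  shows "(\<Sum>w\<leftarrow>concat (map (\<lambda>(a1, a2). map (\<lambda>(c1, c2). [a1, c1, c2]) (G a2)) L). (w ! 0) x * (w ! Suc 0) y * (w ! Suc (Suc 0)) z)
    = (\<Sum>(a1, a2)\<leftarrow>L. a1 x * (\<Sum>(c1, c2)\<leftarrow>G a2. c1 y * c2 z))"
  by (induction L) (auto simp: sum_map3b simp del: map_map)

lemma sum_map2c:
  fixes H :: "'b \<Rightarrow> 'x \<Rightarrow> 'k::comm_ring_1"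
  shows "(\<Sum>w\<leftarrow>map (\<lambda>(b1, b2). [H b1, K b2]) M. (w ! 0) x * (w ! Suc 0) y) = (\<Sum>(b1, b2)\<leftarrow>M. H b1 x * K b2 y)"
  by (induction M) auto

lemma sum_concat2c:
  fixes F :: "'b \<Rightarrow> 'c \<Rightarrow> 'x \<Rightarrow> 'k::comm_ring_1"
  shows "(\<Sum>w\<leftarrow>concat (map (\<lambda>(a1, a2). map (\<lambda>(b1, b2). [F a1 b1, F a2 b2]) M) L). (w ! 0) x * (w ! Suc 0) y)
    = (\<Sum>(a1, a2)\<leftarrow>L. \<Sum>(b1, b2)\<leftarrow>M. F a1 b1 x * F a2 b2 y)"
  by (induction L) (auto simp: sum_map2c simp del: map_map)

lemma swap4: "(\<Sum>p\<leftarrow>P. \<Sum>q\<leftarrow>Q. \<Sum>r\<leftarrow>R. \<Sum>s\<leftarrow>T. F p q r s) = (\<Sum>r\<leftarrow>R. \<Sum>s\<leftarrow>T. \<Sum>p\<leftarrow>P. \<Sum>q\<leftarrow>Q. (F p q r s :: 'z::comm_monoid_add))"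
proof -
  have "(\<Sum>p\<leftarrow>P. \<Sum>q\<leftarrow>Q. \<Sum>r\<leftarrow>R. \<Sum>s\<leftarrow>T. F p q r s) = (\<Sum>p\<leftarrow>P. \<Sum>r\<leftarrow>R. \<Sum>q\<leftarrow>Q. \<Sum>s\<leftarrow>T. F p q r s)"
    by (simp only: sum_list_map_swap[where xs=Q and ys=R])
  also have "\<dots> = (\<Sum>p\<leftarrow>P. \<Sum>r\<leftarrow>R. \<Sum>s\<leftarrow>T. \<Sum>q\<leftarrow>Q. F p q r s)"
    by (simp only: sum_list_map_swap[where xs=Q and ys=T])
  also have "\<dots> = (\<Sum>r\<leftarrow>R. \<Sum>p\<leftarrow>P. \<Sum>s\<leftarrow>T. \<Sum>q\<leftarrow>Q. F p q r s)"
    by (simp only: sum_list_map_swap[where xs=P and ys=R])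
  also have "\<dots> = (\<Sum>r\<leftarrow>R. \<Sum>s\<leftarrow>T. \<Sum>p\<leftarrow>P. \<Sum>q\<leftarrow>Q. F p q r s)"
    by (simp only: sum_list_map_swap[where xs=P and ys=T])
  finally show ?thesis .
qed

lemma sw_swap4: "sw A a (\<lambda>x1 x2. sw B b (\<lambda>y1 y2. sw C c (\<lambda>a1 a2. sw E e (\<lambda>b1 b2. F x1 x2 y1 y2 a1 a2 b1 b2)))) =
    sw C c (\<lambda>a1 a2. sw E e (\<lambda>b1 b2. sw A a (\<lambda>x1 x2. sw B b (\<lambda>y1 y2. (F x1 x2 y1 y2 a1 a2 b1 b2 :: 'z::comm_monoid_add)))))"
  unfolding sw_def split_def by (rule swap4)

context hU
begin

lemma CT2D:
  assumes W: "\<forall>w\<in>set xs \<union> set ys. length w = 2 \<and> set w \<subseteq> D"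
    and C: "\<And>x y. (\<Sum>w\<leftarrow>xs. (w ! 0) x * (w ! Suc 0) y) = (\<Sum>w\<leftarrow>ys. (w ! 0) x * (w ! Suc 0) y)"
  shows "tensor_eq dual_scale D 2 xs ys"
proof -
  interpret dM: modu dual_scale D by standard (rule dmod)
  show ?thesis
  proof (rule dM.CT2[OF LD_basis W])
    fix p q assume "p \<in> set LD" "q \<in> set LD"
    then obtain m m' where "fst p = (\<lambda>g. g m)" "fst q = (\<lambda>g. g m')" by (auto simp: LD_def)
    then show "(\<Sum>w\<leftarrow>xs. fst p (w ! 0) * fst q (w ! Suc 0)) = (\<Sum>w\<leftarrow>ys. fst p (w ! 0) * fst q (w ! Suc 0))"
      using C by simp
  qed
qed

lemma CT3D:
  assumes W: "\<forall>w\<in>set xs \<union> set ys. length w = 3 \<and> set w \<subseteq> D"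
    and C: "\<And>x y z. (\<Sum>w\<leftarrow>xs. (w ! 0) x * (w ! Suc 0) y * (w ! Suc (Suc 0)) z) = (\<Sum>w\<leftarrow>ys. (w ! 0) x * (w ! Suc 0) y * (w ! Suc (Suc 0)) z)"
  shows "tensor_eq dual_scale D 3 xs ys"
proof -
  interpret dM: modu dual_scale D by standard (rule dmod)
  show ?thesis
  proof (rule dM.CT3[OF LD_basis W])
    fix p q s assume "p \<in> set LD" "q \<in> set LD" "s \<in> set LD"
    then obtain m m' m'' where "fst p = (\<lambda>g. g m)" "fst q = (\<lambda>g. g m')" "fst s = (\<lambda>g. g m'')" by (auto simp: LD_def)
    then show "(\<Sum>w\<leftarrow>xs. fst p (w ! 0) * fst q (w ! Suc 0) * fst s (w ! Suc (Suc 0))) =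
        (\<Sum>w\<leftarrow>ys. fst p (w ! 0) * fst q (w ! Suc 0) * fst s (w ! Suc (Suc 0)))"
      using C by simp
  qed
qed

lemma dc_eval: "g \<in> D \<Longrightarrow> sw dc g (\<lambda>u v. u a * v b) = g (mult a b)"
  using dc_spec(2)[of g a b] by (simp add: sw_def)

lemma sum_tens2': "(\<Sum>w\<leftarrow>tens2 L. (w ! 0) x * (w ! Suc 0) y) = sw (\<lambda>_. L) undefined (\<lambda>u v. u x * v y)"
  using sum_tens2[of "\<lambda>u v. u x * v y" L] by (simp add: sw_def)

lemma W_tens2: "(\<And>u v. (u, v) \<in> set L \<Longrightarrow> u \<in> D \<and> v \<in> D) \<Longrightarrow> w \<in> set (tens2 L) \<Longrightarrow> length w = 2 \<and> set w \<subseteq> D"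
  by (auto simp: tens2_def)

lemma dc_inD: "g \<in> D \<Longrightarrow> (u, v) \<in> set (dc g) \<Longrightarrow> u \<in> D \<and> v \<in> D"
  using dc_spec(1) by blast

lemma dc_inD': "(u, v) \<in> set (dc g) \<Longrightarrow> g \<in> D \<Longrightarrow> u \<in> D \<and> v \<in> D"
  using dc_spec(1) by blast

lemma dscale_in[simp]: "u \<in> D \<Longrightarrow> dual_scale r u \<in> D"
  using dmod by (simp add: module_on_def)

lemma dadd_in[simp]: "u \<in> D \<Longrightarrow> v \<in> D \<Longrightarrow> u + v \<in> D"
  using dmod by (simp add: module_on_def)

lemma dual_bialgebra: "bialgebra dual_scale D dm (dual_one UNIV counit) dc (dual_counit one)"
proof -
  have oneD: "counit \<in> D" using counit_lin by (simp add: D_iff)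
  have B4: "lin_on dual_scale D dual_scale (dm a)" if "a \<in> D" for a
    unfolding lin_on_def
    by (auto simp: fun_eq_iff dm_apply dual_scale_def sw_mult_left distrib_left sw_add[symmetric] mult.left_commute)
  have B5: "lin_on dual_scale D dual_scale (\<lambda>a. dm a b)" if "b \<in> D" for b
    unfolding lin_on_def
    by (auto simp: fun_eq_iff dm_apply dual_scale_def sw_mult_left distrib_right sw_add[symmetric] mult.assoc)
  have B6: "dm (dm a b) c = dm a (dm b c)" if "a \<in> D" "b \<in> D" "c \<in> D" for a b c
  proof (rule ext)
    fix x
    have T: "trilin sc UNIV (\<lambda>p q r. a p * b q * c r)" using that by (intro trilin_prod) (simp_all add: D_iff)
    have "dm (dm a b) c x = sw comult x (\<lambda>x1 x2. sw comult x1 (\<lambda>y1 y2. a y1 * b y2 * c x2))"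
      by (simp add: dm_apply sw_mult_right)
    also have "\<dots> = sw comult x (\<lambda>x1 x2. sw comult x2 (\<lambda>z1 z2. a x1 * b z1 * c z2))"
      using E_coassoc[OF _ T] by simp
    also have "\<dots> = dm a (dm b c) x"
      by (simp add: dm_apply sw_mult_left mult.assoc)
    finally show "dm (dm a b) c x = dm a (dm b c) x" .
  qed
  have B7: "dm counit a = a \<and> dm a counit = a" if a: "a \<in> D" for a
  proof (intro conjI ext)
    fix x
    have "dm counit a x = a (sw comult x (\<lambda>x1 x2. sc (counit x1) x2))"
      using lf_sw_sc[where G=a and cm=comult and a=x and w="\<lambda>x1 x2. x2" and h="\<lambda>x1 x2. counit x1"] a
      by (simp add: dm_apply D_iff)
    then show "dm counit a x = a x" using counit_l[of x] by (simp add: sw_def)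
    have "dm a counit x = a (sw comult x (\<lambda>x1 x2. sc (counit x2) x1))"
      using lf_sw_sc[where G=a and cm=comult and a=x and w="\<lambda>x1 x2. x1" and h="\<lambda>x1 x2. counit x2"] a
      by (simp add: dm_apply D_iff mult.commute)
    then show "dm a counit x = a x" using counit_r[of x] by (simp add: sw_def)
  qed
  have B9: "tensor_eq dual_scale D 2 (tens2 (dc (a + b))) (tens2 (dc a @ dc b))" if "a \<in> D" "b \<in> D" for a b
  proof (rule CT2D)
    have ab: "a + b \<in> D" using that dmod by (simp add: module_on_def)
    show "\<forall>w\<in>set (tens2 (dc (a + b))) \<union> set (tens2 (dc a @ dc b)). length w = 2 \<and> set w \<subseteq> D"
      using that ab by (auto simp: tens2_def dest: dc_inD')
    fix x y
    show "(\<Sum>w\<leftarrow>tens2 (dc (a + b)). (w ! 0) x * (w ! Suc 0) y) = (\<Sum>w\<leftarrow>tens2 (dc a @ dc b). (w ! 0) x * (w ! Suc 0) y)"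
      using dc_eval[OF ab] dc_eval[OF that(1)] dc_eval[OF that(2)]
      by (simp add: tens2_append sum_tens2' sw_def)
  qed
  have B10: "tensor_eq dual_scale D 2 (tens2 (dc (dual_scale r a))) (map (\<lambda>(x, y). [dual_scale r x, y]) (dc a))" if "a \<in> D" for r a
  proof (rule CT2D)
    have ra: "dual_scale r a \<in> D" using that dmod by (simp add: module_on_def)
    show "\<forall>w\<in>set (tens2 (dc (dual_scale r a))) \<union> set (map (\<lambda>(x, y). [dual_scale r x, y]) (dc a)). length w = 2 \<and> set w \<subseteq> D"
    proof -
      have inA: "(u, v) \<in> set (dc a) \<Longrightarrow> u \<in> D \<and> v \<in> D" for u v using dc_spec(1)[OF that] by blast
      have inR: "(u, v) \<in> set (dc (dual_scale r a)) \<Longrightarrow> u \<in> D \<and> v \<in> D" for u v using dc_spec(1)[OF ra] by blast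
      show ?thesis using inA inR by (fastforce simp: tens2_def)
    qed
    fix x y
    have "(\<Sum>w\<leftarrow>map (\<lambda>(x, y). [dual_scale r x, y]) (dc a). (w ! 0) x * (w ! Suc 0) y) = r * sw dc a (\<lambda>u v. u x * v y)"
      by (simp add: sw_def o_def split_def dual_scale_def sum_list_const_mult[symmetric] mult.assoc)
    then show "(\<Sum>w\<leftarrow>tens2 (dc (dual_scale r a)). (w ! 0) x * (w ! Suc 0) y) = (\<Sum>w\<leftarrow>map (\<lambda>(x, y). [dual_scale r x, y]) (dc a). (w ! 0) x * (w ! Suc 0) y)"
      using dc_eval[OF ra] dc_eval[OF that] by (simp add: sum_tens2' sw_def dual_scale_def)
  qed
  have inDC: "(u, v) \<in> set (dc g) \<Longrightarrow> u \<in> D \<and> v \<in> D" if "g \<in> D" for g u v using dc_spec(1)[OF that] by blast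
  have B11: "tensor_eq dual_scale D 3
        (concat (map (\<lambda>(a1, a2). map (\<lambda>(b1, b2). [b1, b2, a2]) (dc a1)) (dc a)))
        (concat (map (\<lambda>(a1, a2). map (\<lambda>(c1, c2). [a1, c1, c2]) (dc a2)) (dc a)))" if a: "a \<in> D" for a
  proof (rule CT3D)
    show "\<forall>w\<in>set (concat (map (\<lambda>(a1, a2). map (\<lambda>(b1, b2). [b1, b2, a2]) (dc a1)) (dc a))) \<union>
        set (concat (map (\<lambda>(a1, a2). map (\<lambda>(c1, c2). [a1, c1, c2]) (dc a2)) (dc a))). length w = 3 \<and> set w \<subseteq> D"
    proof (intro ballI)
      fix w assume "w \<in> set (concat (map (\<lambda>(a1, a2). map (\<lambda>(b1, b2). [b1, b2, a2]) (dc a1)) (dc a))) \<union>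
        set (concat (map (\<lambda>(a1, a2). map (\<lambda>(c1, c2). [a1, c1, c2]) (dc a2)) (dc a)))"
      then consider a1 a2 b1 b2 where "(a1, a2) \<in> set (dc a)" "(b1, b2) \<in> set (dc a1)" "w = [b1, b2, a2]"
        | a1 a2 b1 b2 where "(a1, a2) \<in> set (dc a)" "(b1, b2) \<in> set (dc a2)" "w = [a1, b1, b2]"
        by auto
      then show "length w = 3 \<and> set w \<subseteq> D"
      proof cases
        case 1
        then have "a1 \<in> D" "a2 \<in> D" using inDC[OF a] by blast+
        then have "b1 \<in> D" "b2 \<in> D" using inDC 1 by blast+
        then show ?thesis using 1 \<open>a2 \<in> D\<close> by simp
      next
        case 2
        then have "a1 \<in> D" "a2 \<in> D" using inDC[OF a] by blast+
        then have "b1 \<in> D" "b2 \<in> D" using inDC 2 by blast+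
        then show ?thesis using 2 \<open>a1 \<in> D\<close> by simp
      qed
    qed
    fix x y z
    have "(\<Sum>w\<leftarrow>concat (map (\<lambda>(a1, a2). map (\<lambda>(b1, b2). [b1, b2, a2]) (dc a1)) (dc a)). (w ! 0) x * (w ! Suc 0) y * (w ! Suc (Suc 0)) z)
        = sw dc a (\<lambda>a1 a2. sw dc a1 (\<lambda>b1 b2. b1 x * b2 y) * a2 z)"
      unfolding sum_concat3a sw_def ..
    also have "\<dots> = sw dc a (\<lambda>a1 a2. a1 (mult x y) * a2 z)"
    proof (rule sw_cong)
      fix a1 a2 assume "(a1, a2) \<in> set (dc a)"
      then have "a1 \<in> D" using inDC[OF a] by blast
      then show "sw dc a1 (\<lambda>b1 b2. b1 x * b2 y) * a2 z = a1 (mult x y) * a2 z" using dc_eval by simp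
    qed
    also have "\<dots> = a (mult (mult x y) z)" using dc_eval[OF a] by simp
    also have "\<dots> = a (mult x (mult y z))" by (simp add: assoc)
    also have "\<dots> = sw dc a (\<lambda>a1 a2. a1 x * a2 (mult y z))" using dc_eval[OF a] by simp
    also have "\<dots> = sw dc a (\<lambda>a1 a2. a1 x * sw dc a2 (\<lambda>c1 c2. c1 y * c2 z))"
    proof (rule sw_cong)
      fix a1 a2 assume "(a1, a2) \<in> set (dc a)"
      then have "a2 \<in> D" using inDC[OF a] by blast
      then show "a1 x * a2 (mult y z) = a1 x * sw dc a2 (\<lambda>c1 c2. c1 y * c2 z)" using dc_eval by simp
    qed
    also have "\<dots> = (\<Sum>w\<leftarrow>concat (map (\<lambda>(a1, a2). map (\<lambda>(c1, c2). [a1, c1, c2]) (dc a2)) (dc a)). (w ! 0) x * (w ! Suc 0) y * (w ! Suc (Suc 0)) z)"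
      unfolding sum_concat3b sw_def ..
    finally show "(\<Sum>w\<leftarrow>concat (map (\<lambda>(a1, a2). map (\<lambda>(b1, b2). [b1, b2, a2]) (dc a1)) (dc a)). (w ! 0) x * (w ! Suc 0) y * (w ! Suc (Suc 0)) z) =
        (\<Sum>w\<leftarrow>concat (map (\<lambda>(a1, a2). map (\<lambda>(c1, c2). [a1, c1, c2]) (dc a2)) (dc a)). (w ! 0) x * (w ! Suc 0) y * (w ! Suc (Suc 0)) z)" .
  qed
  have B12: "lin_on dual_scale D (\<lambda>r s. r * s) (dual_counit one)"
    by (simp add: lin_on_def dual_counit_def dual_scale_def)
  have B13: "(\<Sum>(x, y)\<leftarrow>dc a. dual_scale (dual_counit one x) y) = a" if a: "a \<in> D" for a
  proof (rule ext)
    fix b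
    have "(\<Sum>(x, y)\<leftarrow>dc a. dual_scale (dual_counit one x) y) b = sw dc a (\<lambda>u v. u one * v b)"
      unfolding sw_def sum_list_map_fun_apply by (simp add: split_def dual_scale_def dual_counit_def)
    also have "\<dots> = a b" using dc_eval[OF a] by simp
    finally show "(\<Sum>(x, y)\<leftarrow>dc a. dual_scale (dual_counit one x) y) b = a b" .
  qed
  have B14: "(\<Sum>(x, y)\<leftarrow>dc a. dual_scale (dual_counit one y) x) = a" if a: "a \<in> D" for a
  proof (rule ext)
    fix b
    have "(\<Sum>(x, y)\<leftarrow>dc a. dual_scale (dual_counit one y) x) b = sw dc a (\<lambda>u v. u b * v one)"
      unfolding sw_def sum_list_map_fun_apply by (simp add: split_def dual_scale_def dual_counit_def mult.commute)
    also have "\<dots> = a b" using dc_eval[OF a] by simp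
    finally show "(\<Sum>(x, y)\<leftarrow>dc a. dual_scale (dual_counit one y) x) b = a b" .
  qed
  have B15: "tensor_eq dual_scale D 2 (tens2 (dc (dm a b)))
        (concat (map (\<lambda>(a1, a2). map (\<lambda>(b1, b2). [dm a1 b1, dm a2 b2]) (dc b)) (dc a)))" if a: "a \<in> D" and b: "b \<in> D" for a b
  proof (rule CT2D)
    have ab: "dm a b \<in> D" by (rule dm_in[OF a b])
    show "\<forall>w\<in>set (tens2 (dc (dm a b))) \<union> set (concat (map (\<lambda>(a1, a2). map (\<lambda>(b1, b2). [dm a1 b1, dm a2 b2]) (dc b)) (dc a))).
        length w = 2 \<and> set w \<subseteq> D"
    proof -
      have "\<And>u v. (u, v) \<in> set (dc a) \<Longrightarrow> u \<in> D \<and> v \<in> D" using inDC[OF a] by blast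
      moreover have "\<And>u v. (u, v) \<in> set (dc b) \<Longrightarrow> u \<in> D \<and> v \<in> D" using inDC[OF b] by blast
      moreover have "\<And>u v. (u, v) \<in> set (dc (dm a b)) \<Longrightarrow> u \<in> D \<and> v \<in> D" using inDC[OF ab] by blast
      ultimately show ?thesis by (fastforce simp: tens2_def intro: dm_in)
    qed
    fix x y
    have Bab: "bilin sc UNIV (\<lambda>p q. a p * b q)" using a b by (intro bilin_prod) (simp_all add: D_iff)
    have "(\<Sum>w\<leftarrow>tens2 (dc (dm a b)). (w ! 0) x * (w ! Suc 0) y) = dm a b (mult x y)"
      using dc_eval[OF ab] by (simp add: sum_tens2' sw_def)
    also have "\<dots> = sw comult x (\<lambda>x1 x2. sw comult y (\<lambda>y1 y2. a (mult x1 y1) * b (mult x2 y2)))"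
      using E_mult[OF _ _ Bab] by (simp add: dm_apply)
    also have "\<dots> = sw comult x (\<lambda>x1 x2. sw comult y (\<lambda>y1 y2. sw dc a (\<lambda>a1 a2. sw dc b (\<lambda>b1 b2. (a1 x1 * b1 x2) * (a2 y1 * b2 y2)))))"
    proof -
      have "a (mult x1 y1) * b (mult x2 y2) = sw dc a (\<lambda>a1 a2. sw dc b (\<lambda>b1 b2. (a1 x1 * b1 x2) * (a2 y1 * b2 y2)))" for x1 x2 y1 y2
      proof -
        have "a (mult x1 y1) * b (mult x2 y2) = sw dc a (\<lambda>a1 a2. a1 x1 * a2 y1) * sw dc b (\<lambda>b1 b2. b1 x2 * b2 y2)"
          using dc_eval[OF a] dc_eval[OF b] by simp
        also have "\<dots> = sw dc a (\<lambda>a1 a2. sw dc b (\<lambda>b1 b2. (a1 x1 * a2 y1) * (b1 x2 * b2 y2)))"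
          by (subst sw_mult_right) (simp add: sw_mult_left)
        also have "\<dots> = sw dc a (\<lambda>a1 a2. sw dc b (\<lambda>b1 b2. (a1 x1 * b1 x2) * (a2 y1 * b2 y2)))"
          by (simp add: ac_simps)
        finally show ?thesis .
      qed
      then show ?thesis by simp
    qed
    also have "\<dots> = sw dc a (\<lambda>a1 a2. sw dc b (\<lambda>b1 b2. sw comult x (\<lambda>x1 x2. sw comult y (\<lambda>y1 y2. (a1 x1 * b1 x2) * (a2 y1 * b2 y2)))))"
      by (rule sw_swap4)
    also have "\<dots> = sw dc a (\<lambda>a1 a2. sw dc b (\<lambda>b1 b2. dm a1 b1 x * dm a2 b2 y))"
    proof -
      have e: "dm a1 b1 x * dm a2 b2 y = sw comult x (\<lambda>x1 x2. sw comult y (\<lambda>y1 y2. (a1 x1 * b1 x2) * (a2 y1 * b2 y2)))" for a1 b1 a2 b2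
        unfolding dm_apply by (subst sw_mult_right) (simp add: sw_mult_left)
      show ?thesis by (simp only: e)
    qed
    also have "\<dots> = (\<Sum>w\<leftarrow>concat (map (\<lambda>(a1, a2). map (\<lambda>(b1, b2). [dm a1 b1, dm a2 b2]) (dc b)) (dc a)). (w ! 0) x * (w ! Suc 0) y)"
      unfolding sum_concat2c sw_def ..
    finally show "(\<Sum>w\<leftarrow>tens2 (dc (dm a b)). (w ! 0) x * (w ! Suc 0) y) =
        (\<Sum>w\<leftarrow>concat (map (\<lambda>(a1, a2). map (\<lambda>(b1, b2). [dm a1 b1, dm a2 b2]) (dc b)) (dc a)). (w ! 0) x * (w ! Suc 0) y)" .
  qed
  have B16: "tensor_eq dual_scale D 2 (tens2 (dc counit)) [[counit, counit]]"
  proof (rule CT2D)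
    show "\<forall>w\<in>set (tens2 (dc counit)) \<union> set [[counit, counit]]. length w = 2 \<and> set w \<subseteq> D"
      using inDC[OF oneD] oneD by (fastforce simp: tens2_def)
    fix x y
    show "(\<Sum>w\<leftarrow>tens2 (dc counit). (w ! 0) x * (w ! Suc 0) y) = (\<Sum>w\<leftarrow>[[counit, counit]]. (w ! 0) x * (w ! Suc 0) y)"
      using dc_eval[OF oneD] by (simp add: sum_tens2' sw_def counit_mult)
  qed
  have B17: "dual_counit one (dm a b) = dual_counit one a * dual_counit one b" if a: "a \<in> D" and b: "b \<in> D" for a b
  proof -
    have Bab: "bilin sc UNIV (\<lambda>p q. a p * b q)" using a b by (intro bilin_prod) (simp_all add: D_iff)
    show ?thesis using E_one[OF Bab] by (simp add: dual_counit_def dm_apply)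
  qed
  have B18: "dual_counit one counit = 1" by (simp add: dual_counit_def counit_one)
  have B8: "\<forall>a\<in>D. \<forall>(x, y)\<in>set (dc a). x \<in> D \<and> y \<in> D"
  proof (intro ballI, clarify)
    fix a x y assume "a \<in> D" "(x, y) \<in> set (dc a)"
    then show "x \<in> D \<and> y \<in> D" by (rule inDC)
  qed
  show ?thesis
    unfolding bialgebra_def done_eq
    apply (intro conjI)
                     apply (rule dmod)
                    apply (use dm_in in blast)
                   apply (rule oneD)
                  apply (use B4 in blast)
                 apply (use B5 in blast)
                apply (use B6 in blast)
               apply (use B7 in blast)
              apply (rule B8)
             apply (use B9 in blast)
            apply (use B10 in blast)
           apply (use B11 in blast)
          apply (rule B12)
         apply (use B13 in blast)
        apply (use B14 in blast)
       apply (use B15 in blast)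
      apply (rule B16)
     apply (use B17 in blast)
    apply (rule B18)
    done
qed

end


lemma sum_list_nth_conv: "(\<Sum>j\<leftarrow>[0..<length xs]. F (xs ! j)) = (\<Sum>p\<leftarrow>xs. F p)"
proof -
  have "map (\<lambda>j. F (xs ! j)) [0..<length xs] = map F (map ((!) xs) [0..<length xs])" by simp
  also have "\<dots> = map F xs" by (simp add: map_nth)
  finally show ?thesis by simp
qed

context hU
begin

lemma dual_fgp: "fin_gen_proj dual_scale D"
proof -
  interpret dM: modu dual_scale D by standard (rule dmod)
  define n where "n = length DB"
  define p :: "(nat \<Rightarrow> 'k) \<Rightarrow> ('a \<Rightarrow> 'k)" where "p v = (\<Sum>j\<leftarrow>[0..<n]. dual_scale (v j) (fst (DB ! j)))" for v
  define i :: "('a \<Rightarrow> 'k) \<Rightarrow> nat \<Rightarrow> 'k" where "i g = (\<lambda>j. if j < n then g (snd (DB ! j)) else 0)" for g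
  have fstD: "j < n \<Longrightarrow> fst (DB ! j) \<in> D" for j
    using lf_DB[of "fst (DB ! j)" "snd (DB ! j)"] nth_mem[of j DB] by (simp add: n_def)
  have papply: "p v x = (\<Sum>j\<leftarrow>[0..<n]. v j * fst (DB ! j) x)" for v x
    by (simp add: p_def sum_list_map_fun_apply dual_scale_def)
  show ?thesis
    unfolding fin_gen_proj_def
  proof (intro exI conjI)
    show "lin_on kn_scale (kn n) dual_scale p"
      unfolding lin_on_def
      by (auto simp: fun_eq_iff papply kn_scale_def dual_scale_def distrib_right sum_list_addf
          sum_list_const_mult[symmetric] mult.assoc)
    show "p ` kn n \<subseteq> D"
    proof
      fix g assume "g \<in> p ` kn n"
      then obtain v where "g = p v" by auto
      then show "g \<in> D" unfolding p_def by (auto intro!: dM.sum_list_map_in dscale_in fstD)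
    qed
    show "lin_on dual_scale D kn_scale i"
      unfolding lin_on_def by (auto simp: fun_eq_iff i_def kn_scale_def dual_scale_def)
    show "i ` D \<subseteq> kn n" by (auto simp: i_def kn_def)
    show "\<forall>a\<in>D. p (i a) = a"
    proof
      fix g assume g: "g \<in> D"
      have "p (i g) = (\<Sum>j\<leftarrow>[0..<n]. dual_scale (g (snd (DB ! j))) (fst (DB ! j)))"
        unfolding p_def i_def by (intro sum_list_map_cong') auto
      also have "\<dots> = (\<Sum>q\<leftarrow>DB. dual_scale (g (snd q)) (fst q))"
        unfolding n_def by (rule sum_list_nth_conv)
      also have "\<dots> = g" using D_expand_fun[OF g] by (simp add: split_def)
      finally show "p (i g) = g" .
    qed
  qed
qed

end


context hU
begin

lemma lf_list_sc:
  assumes "lf G" 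
  shows "G (\<Sum>p\<leftarrow>L. sc (h p) (w p)) = (\<Sum>p\<leftarrow>L. h p * G (w p))"
  using lin_list_sc[OF assms, of L w h] by simp

lemma forward:
  assumes FH: "fhalg sc UNIV mult one comult counit f xys"
  shows "FH_algebra dual_scale D dm (dual_one UNIV counit) dc (dual_counit one)"
proof -
  interpret F: fhalg sc UNIV mult one comult counit f xys by (rule FH)
  define Q where "Q a = (\<lambda>b. f (mult b (Zp f F.tt' a)))" for a
  define \<Phi> where "\<Phi> = (\<lambda>g :: 'a \<Rightarrow> 'k. g F.tt)"
  define XY where "XY = map (\<lambda>(\<mu>, m). (\<mu>, Q m)) DB"
  have QD: "Q a \<in> D" for a unfolding Q_def D_iff by (rule lf_mult_l[OF F.f_lin]) simp
  have c3: "(\<Sum>(x, y)\<leftarrow>XY. dual_scale (\<Phi> (dm y g)) x) = g" if g: "g \<in> D" for g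
  proof -
    have k: "\<Phi> (dm (Q m) g) = g m" for m
    proof -
      have "\<Phi> (dm (Q m) g) = sw comult F.tt (\<lambda>x1 x2. f (mult x1 (Zp f F.tt' m)) * g x2)"
        by (simp add: \<Phi>_def dm_apply Q_def)
      also have "\<dots> = g (sw comult F.tt (\<lambda>x1 x2. sc (f (mult x1 (Zp f F.tt' m))) x2))"
        using g by (subst lf_sw_sc) (simp_all add: D_iff)
      also have "\<dots> = g (Sm f F.tt (Zp f F.tt' m))" by (simp add: Sm_def)
      also have "\<dots> = g m" using F.SZ by simp
      finally show ?thesis .
    qed
    have "(\<Sum>(x, y)\<leftarrow>XY. dual_scale (\<Phi> (dm y g)) x) = (\<Sum>(\<mu>, m)\<leftarrow>DB. dual_scale (\<Phi> (dm (Q m) g)) \<mu>)"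
      unfolding XY_def by (rule sum_map_pairs)
    also have "\<dots> = (\<Sum>(\<mu>, m)\<leftarrow>DB. dual_scale (g m) \<mu>)" by (simp add: k)
    also have "\<dots> = g" by (rule D_expand_fun[OF g])
    finally show ?thesis .
  qed
  have c4: "(\<Sum>(x, y)\<leftarrow>XY. dual_scale (\<Phi> (dm g x)) y) = g" if g: "g \<in> D" for g
  proof -
    define c where "c = (\<Sum>(x, y)\<leftarrow>xys. sc (g y) x)"
    have gc: "g b = f (mult b c)" for b
    proof -
      have "f (mult b c) = (\<Sum>(x, y)\<leftarrow>xys. g y * f (mult b x))"
        unfolding c_def using F.lf_sum_sc'[OF lf_mult_r[OF F.f_lin, of b]] by simp
      also have "\<dots> = g (\<Sum>(x, y)\<leftarrow>xys. sc (f (mult b x)) y)"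
        using F.lf_sum_sc'[of g xys "\<lambda>x y. y" "\<lambda>x y. f (mult b x)"] g by (simp add: D_iff mult.commute)
      also have "\<dots> = g b" using F.F2[of b] by simp
      finally show ?thesis by simp
    qed
    have P: "\<Phi> (dm g \<mu>) = \<mu> (Sm f F.tt c)" if mu: "\<mu> \<in> D" for \<mu>
    proof -
      have "\<Phi> (dm g \<mu>) = sw comult F.tt (\<lambda>x1 x2. f (mult x1 c) * \<mu> x2)"
        by (simp add: \<Phi>_def dm_apply gc)
      also have "\<dots> = \<mu> (sw comult F.tt (\<lambda>x1 x2. sc (f (mult x1 c)) x2))"
        using mu by (subst lf_sw_sc) (simp_all add: D_iff)
      also have "\<dots> = \<mu> (Sm f F.tt c)" by (simp add: Sm_def)
      finally show ?thesis .
    qed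
    show ?thesis
    proof (rule ext)
      fix b
      have lfb: "lf (\<lambda>z. f (mult b (Zp f F.tt' z)))"
        by (rule lin_comp[OF Zp_lin[OF F.f_lin F.tt'_in] _ lf_mult_r[OF F.f_lin]]) simp_all
      have "(\<Sum>(x, y)\<leftarrow>XY. dual_scale (\<Phi> (dm g x)) y) b = (\<Sum>(\<mu>, m)\<leftarrow>DB. dual_scale (\<Phi> (dm g \<mu>)) (Q m)) b"
        unfolding XY_def by (subst sum_map_pairs) (rule refl)
      also have "\<dots> = (\<Sum>(\<mu>, m)\<leftarrow>DB. \<mu> (Sm f F.tt c) * f (mult b (Zp f F.tt' m)))"
        unfolding sum_list_map_fun_apply by (intro sum_list_map_cong') (auto simp: P lf_DB dual_scale_def Q_def)
      also have "\<dots> = f (mult b (Zp f F.tt' (\<Sum>(\<mu>, m)\<leftarrow>DB. sc (\<mu> (Sm f F.tt c)) m)))"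
        using lf_list_sc[OF lfb, where L=DB and h="\<lambda>p. fst p (Sm f F.tt c)" and w=snd] by (simp add: split_def)
      also have "\<dots> = f (mult b (Zp f F.tt' (Sm f F.tt c)))" using DB_expand by simp
      also have "\<dots> = f (mult b c)" using F.ZS by simp
      also have "\<dots> = g b" by (simp add: gc)
      finally show "(\<Sum>(x, y)\<leftarrow>XY. dual_scale (\<Phi> (dm g x)) y) b = g b" .
    qed
  qed
  have c5: "(\<Sum>(a1, a2)\<leftarrow>dc g. dual_scale (\<Phi> a1) a2) = dual_scale (\<Phi> g) (dual_one UNIV counit)" if g: "g \<in> D" for g
  proof (rule ext)
    fix b
    have "(\<Sum>(a1, a2)\<leftarrow>dc g. dual_scale (\<Phi> a1) a2) b = sw dc g (\<lambda>u v. u F.tt * v b)"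
      unfolding sw_def sum_list_map_fun_apply by (simp add: split_def dual_scale_def \<Phi>_def)
    also have "\<dots> = g (mult F.tt b)" by (rule dc_eval[OF g])
    also have "\<dots> = g F.tt * counit b" using F.tt_right[of b] g by (simp add: D_sc mult.commute)
    finally show "(\<Sum>(a1, a2)\<leftarrow>dc g. dual_scale (\<Phi> a1) a2) b = dual_scale (\<Phi> g) (dual_one UNIV counit) b"
      by (simp add: dual_scale_def \<Phi>_def done_eq)
  qed
  have c1: "lin_on dual_scale D (\<lambda>r s. r * s) \<Phi>" by (simp add: lin_on_def \<Phi>_def dual_scale_def)
  have c2: "\<forall>(x, y)\<in>set XY. x \<in> D \<and> y \<in> D" by (auto simp: XY_def QD lf_DB)
  show ?thesis
    unfolding FH_algebra_def
    using dual_bialgebra dual_fgp c1 c2 c3 c4 c5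
    by blast
qed

end


context hU
begin

lemma backward:
  assumes E: "ebialg sc UNIV mult one comult counit"
    and FD: "FH_algebra dual_scale D dm (dual_one UNIV counit) dc (dual_counit one)"
  shows "\<exists>f xys. fhalg sc UNIV mult one comult counit f xys"
proof -
  obtain \<Phi> XY where BD: "bialgebra dual_scale D dm (dual_one UNIV counit) dc (dual_counit one)"
    and PD: "fin_gen_proj dual_scale D"
    and c1: "lin_on dual_scale D (\<lambda>r s. r * s) \<Phi>"
    and c2: "\<forall>(x, y)\<in>set XY. x \<in> D \<and> y \<in> D"
    and c3: "\<forall>a\<in>D. (\<Sum>(x, y)\<leftarrow>XY. dual_scale (\<Phi> (dm y a)) x) = a"
    and c4: "\<forall>a\<in>D. (\<Sum>(x, y)\<leftarrow>XY. dual_scale (\<Phi> (dm a x)) y) = a"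
    and c5: "\<forall>a\<in>D. (\<Sum>(a1, a2)\<leftarrow>dc a. dual_scale (\<Phi> a1) a2) = dual_scale (\<Phi> a) (dual_one UNIV counit)"
    using FD unfolding FH_algebra_def by blast
  have ED: "ebialg dual_scale D dm (dual_one UNIV counit) dc (dual_counit one)"
    by (rule bialgebra_ebialg[OF BD PD])
  interpret G: fhalg dual_scale D dm "dual_one UNIV counit" dc "dual_counit one" \<Phi> XY
  proof (rule fhalg.intro[OF ED], unfold_locales)
    show "lin_on dual_scale D (\<lambda>r s. r * s) \<Phi>" by (rule c1)
    fix x y assume "(x, y) \<in> set XY" then show "x \<in> D \<and> y \<in> D" using c2 by blast
  next
    fix a assume "a \<in> D" then show "(\<Sum>(x, y)\<leftarrow>XY. dual_scale (\<Phi> (dm y a)) x) = a" using c3 by blast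
  next
    fix a assume "a \<in> D" then show "(\<Sum>(x, y)\<leftarrow>XY. dual_scale (\<Phi> (dm a x)) y) = a" using c4 by blast
  next
    fix a assume "a \<in> D" then show "sw dc a (\<lambda>x y. dual_scale (\<Phi> x) y) = dual_scale (\<Phi> a) (dual_one UNIV counit)"
      using c5 by (simp add: sw_def)
  qed
  define T where "T = G.tt"
  define T' where "T' = G.tt'"
  have TD: "T \<in> D" unfolding T_def by (rule G.tt_in)
  have T'D: "T' \<in> D" unfolding T'_def by (rule G.tt'_in)
  define \<tau> where "\<tau> = (\<Sum>(\<mu>, m)\<leftarrow>DB. sc (\<Phi> \<mu>) m)"
  have Phi_tau: "\<Phi> u = u \<tau>" if u: "u \<in> D" for u
  proof -
    have "\<Phi> u = \<Phi> (\<Sum>p\<leftarrow>DB. dual_scale (u (snd p)) (fst p))" using D_expand_fun[OF u] by (simp add: split_def)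
    also have "\<dots> = (\<Sum>p\<leftarrow>DB. u (snd p) * \<Phi> (fst p))"
      by (rule G.lin_list_sc[OF c1]) (auto intro: lf_DB)
    also have "\<dots> = (\<Sum>p\<leftarrow>DB. \<Phi> (fst p) * u (snd p))" by (simp add: mult.commute)
    also have "\<dots> = u \<tau>" unfolding \<tau>_def using lf_list_sc[where G=u and L=DB and h="\<lambda>p. \<Phi> (fst p)" and w=snd] u
      by (simp add: split_def D_iff)
    finally show ?thesis .
  qed
  define \<Psi> where "\<Psi> a = (\<lambda>b. T (mult a b))" for a
  define L where "L h = sw comult \<tau> (\<lambda>x y. sc (h y) x)" for h :: "'a \<Rightarrow> 'k"
  have inDC: "(u, v) \<in> set (dc g) \<Longrightarrow> u \<in> D \<and> v \<in> D" if "g \<in> D" for g u v using dc_spec(1)[OF that] by blast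
  have SmL: "G.Sm \<Phi> T h = \<Psi> (L h)" if h: "h \<in> D" for h
  proof (rule ext)
    fix b
    have "G.Sm \<Phi> T h b = sw dc T (\<lambda>u v. \<Phi> (dm u h) * v b)"
      unfolding G.Sm_def sw_def sum_list_map_fun_apply by (simp add: split_def dual_scale_def)
    also have "\<dots> = sw dc T (\<lambda>u v. u (L h) * v b)"
    proof (rule sw_cong)
      fix u v assume "(u, v) \<in> set (dc T)"
      then have u: "u \<in> D" using inDC[OF TD] by blast
      have "\<Phi> (dm u h) = dm u h \<tau>" by (rule Phi_tau[OF dm_in[OF u h]])
      also have "\<dots> = sw comult \<tau> (\<lambda>x y. h y * u x)" by (simp add: dm_apply mult.commute)
      also have "\<dots> = u (L h)" unfolding L_def using u by (subst lf_sw_sc) (simp_all add: D_iff)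
      finally show "\<Phi> (dm u h) * v b = u (L h) * v b" by simp
    qed
    also have "\<dots> = T (mult (L h) b)" by (rule dc_eval[OF TD])
    finally show "G.Sm \<Phi> T h b = \<Psi> (L h) b" by (simp add: \<Psi>_def)
  qed
  define R' where "R' \<Xi> = (\<Sum>(X, Y)\<leftarrow>XY. dual_scale (\<Xi> Y) X)" for \<Xi> :: "('a \<Rightarrow> 'k) \<Rightarrow> 'k"
  have XYin: "p \<in> set XY \<Longrightarrow> fst p \<in> D \<and> snd p \<in> D" for p using c2 by auto
  have R'D: "R' \<Xi> \<in> D" for \<Xi>
    unfolding R'_def using XYin by (auto simp: split_def intro!: G.sum_list_map_in dscale_in)
  have PsiR: "\<Phi> (dm u (R' \<Xi>)) = \<Xi> u" if X: "lin_on dual_scale D (\<lambda>r s. r * s) \<Xi>" and u: "u \<in> D" for \<Xi> u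
  proof -
    have "dm u (R' \<Xi>) = (\<Sum>p\<leftarrow>XY. dual_scale (\<Xi> (snd p)) (dm u (fst p)))"
      unfolding R'_def split_def by (rule G.lin_list_sc[OF G.mult_lin_r[OF u]]) (use XYin in blast)
    then have "\<Phi> (dm u (R' \<Xi>)) = (\<Sum>p\<leftarrow>XY. \<Xi> (snd p) * \<Phi> (dm u (fst p)))"
      using G.lin_list_sc[OF c1, where L=XY and w="\<lambda>p. dm u (fst p)" and h="\<lambda>p. \<Xi> (snd p)"] XYin u by (simp add: dm_in)
    also have "\<dots> = (\<Sum>p\<leftarrow>XY. \<Phi> (dm u (fst p)) * \<Xi> (snd p))" by (simp add: mult.commute)
    also have "\<dots> = \<Xi> (\<Sum>p\<leftarrow>XY. dual_scale (\<Phi> (dm u (fst p))) (snd p))"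
      using G.lin_list_sc[OF X, where L=XY and w=snd and h="\<lambda>p. \<Phi> (dm u (fst p))"] XYin by simp
    also have "\<dots> = \<Xi> u" using c4 u by (simp add: split_def)
    finally show ?thesis .
  qed
  have evlin: "lin_on dual_scale D (\<lambda>r s. r * s) (\<lambda>u. u a)" for a by (simp add: lin_on_def dual_scale_def)
  have SmR: "G.Sm \<Phi> T (R' (\<lambda>u. u a)) = \<Psi> a" for a
  proof (rule ext)
    fix b
    have "G.Sm \<Phi> T (R' (\<lambda>u. u a)) b = sw dc T (\<lambda>u v. \<Phi> (dm u (R' (\<lambda>u. u a))) * v b)"
      unfolding G.Sm_def sw_def sum_list_map_fun_apply by (simp add: split_def dual_scale_def)
    also have "\<dots> = sw dc T (\<lambda>u v. u a * v b)"
    proof (rule sw_cong)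
      fix u v assume "(u, v) \<in> set (dc T)"
      then have u: "u \<in> D" using inDC[OF TD] by blast
      show "\<Phi> (dm u (R' (\<lambda>u. u a))) * v b = u a * v b" using PsiR[OF evlin u] by simp
    qed
    also have "\<dots> = T (mult a b)" by (rule dc_eval[OF TD])
    finally show "G.Sm \<Phi> T (R' (\<lambda>u. u a)) b = \<Psi> a b" by (simp add: \<Psi>_def)
  qed
  have inj: "x = y" if "\<Psi> x = \<Psi> y" for x y
  proof (rule sep_D)
    have "G.Sm \<Phi> T (R' (\<lambda>u. u x)) = G.Sm \<Phi> T (R' (\<lambda>u. u y))" using that by (simp add: SmR)
    then have "G.Zp \<Phi> T' (G.Sm \<Phi> T (R' (\<lambda>u. u x))) = G.Zp \<Phi> T' (G.Sm \<Phi> T (R' (\<lambda>u. u y)))" by simp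
    then have R: "R' (\<lambda>u. u x) = R' (\<lambda>u. u y)" using G.ZS[OF R'D] by (simp add: T_def T'_def)
    fix \<mu> m assume "(\<mu>, m) \<in> set DB"
    then have mu: "\<mu> \<in> D" by (rule lf_DB)
    have "\<mu> x = \<Phi> (dm \<mu> (R' (\<lambda>u. u x)))" using PsiR[OF evlin mu] by simp
    also have "\<dots> = \<Phi> (dm \<mu> (R' (\<lambda>u. u y)))" using R by simp
    also have "\<dots> = \<mu> y" using PsiR[OF evlin mu] by simp
    finally show "\<mu> x = \<mu> y" .
  qed
  define W where "W h = L (G.Zp \<Phi> T' h)" for h
  have PsiW: "\<Psi> (W h) = h" if h: "h \<in> D" for h
  proof -
    have "\<Psi> (W h) = G.Sm \<Phi> T (G.Zp \<Phi> T' h)" unfolding W_def using SmL[OF G.Zp_in[OF T'D]] by simp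
    also have "\<dots> = h" using G.SZ[OF h] by (simp add: T_def T'_def)
    finally show ?thesis .
  qed
  define xys where "xys = map (\<lambda>(\<mu>, m). (m, W \<mu>)) DB"
  have TL: "lf T" using TD by (simp add: D_iff)
  have "fhalg sc UNIV mult one comult counit T xys"
  proof (rule fhalg.intro[OF E], unfold_locales)
      show "lf T" by (rule TL)
    next
      fix x y show "x \<in> UNIV \<and> y \<in> UNIV" by simp
    next
      fix a :: 'a
      have "(\<Sum>(x, y)\<leftarrow>xys. sc (T (mult y a)) x) = (\<Sum>(\<mu>, m)\<leftarrow>DB. sc (T (mult (W \<mu>) a)) m)"
        unfolding xys_def by (rule sum_map_pairs)
      also have "\<dots> = (\<Sum>(\<mu>, m)\<leftarrow>DB. sc (\<mu> a) m)"
      proof (rule sum_list_map_cong', clarify)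
        fix \<mu> m assume "(\<mu>, m) \<in> set DB"
        then have "\<Psi> (W \<mu>) = \<mu>" using PsiW lf_DB by blast
        then show "sc (T (mult (W \<mu>) a)) m = sc (\<mu> a) m" unfolding \<Psi>_def by (metis)
      qed
      also have "\<dots> = a" by (rule DB_expand) simp
      finally show "(\<Sum>(x, y)\<leftarrow>xys. sc (T (mult y a)) x) = a" .
    next
      fix a :: 'a
      define c where "c = (\<Sum>(x, y)\<leftarrow>xys. sc (T (mult a x)) y)"
      have c': "c = (\<Sum>p\<leftarrow>DB. sc (T (mult a (snd p))) (W (fst p)))"
        unfolding c_def xys_def by (subst sum_map_pairs) (simp add: split_def)
      have "\<Psi> c = \<Psi> a"
      proof (rule ext)
        fix b
        have "\<Psi> c b = (\<Sum>p\<leftarrow>DB. T (mult a (snd p)) * T (mult (W (fst p)) b))"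
          unfolding \<Psi>_def c' by (rule lf_list_sc[OF lf_mult_l[OF TL]]) simp
        also have "\<dots> = (\<Sum>p\<leftarrow>DB. T (mult a (snd p)) * fst p b)"
        proof (rule sum_list_map_cong')
          fix p assume "p \<in> set DB"
          then have "\<Psi> (W (fst p)) = fst p" using PsiW lf_DB[of "fst p" "snd p"] by simp
          then show "T (mult a (snd p)) * T (mult (W (fst p)) b) = T (mult a (snd p)) * fst p b"
            unfolding \<Psi>_def by (metis)
        qed
        also have "\<dots> = \<Psi> a b"
        proof -
          have "\<Psi> a \<in> D" unfolding \<Psi>_def D_iff by (rule lf_mult_r[OF TL]) simp
          from D_expand[OF this, of b] show ?thesis by (simp add: \<Psi>_def split_def)
        qed
        finally show "\<Psi> c b = \<Psi> a b" .
      qed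
      then show "c = a" by (rule inj)
    next
      fix a :: 'a
      show "sw comult a (\<lambda>x y. sc (T x) y) = sc (T a) one"
      proof (rule sep_eq)
        show "sw comult a (\<lambda>x y. sc (T x) y) \<in> UNIV" "sc (T a) one \<in> UNIV" by simp_all
        fix g assume g: "lf g"
        then have gD: "g \<in> D" by (simp add: D_iff)
        have "g (sw comult a (\<lambda>x y. sc (T x) y)) = sw comult a (\<lambda>x y. T x * g y)"
          using g by (subst lf_sw_sc) simp_all
        also have "\<dots> = dm T g a" by (simp add: dm_apply)
        also have "\<dots> = dual_scale (dual_counit one g) T a" using G.tt_right[OF gD] by (simp add: T_def)
        also have "\<dots> = g (sc (T a) one)" using g by (simp add: dual_scale_def dual_counit_def lin_sc mult.commute)
        finally show "g (sw comult a (\<lambda>x y. sc (T x) y)) = g (sc (T a) one)" .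
      qed
  qed
  then show ?thesis by blast
qed

end

theorem mainTheorem17:
  fixes sc :: "'k::comm_ring_1 \<Rightarrow> 'h::ab_group_add \<Rightarrow> 'h"
    and mult :: "'h \<Rightarrow> 'h \<Rightarrow> 'h" and one :: 'h
    and comult :: "'h \<Rightarrow> ('h \<times> 'h) list" and counit :: "'h \<Rightarrow> 'k"
  assumes "bialgebra sc UNIV mult one comult counit"
    and "fin_gen_proj sc UNIV"
  shows "FH_algebra sc UNIV mult one comult counit \<longleftrightarrow>
         FH_algebra dual_scale (dual_carrier sc UNIV) (dual_mult UNIV comult) (dual_one UNIV counit)
                    (dual_comult sc UNIV mult) (dual_counit one)"
proof -
  have E: "ebialg sc UNIV mult one comult counit" by (rule bialgebra_ebialg[OF assms])
  interpret hU sc mult one comult counit unfolding hU_def by (rule E)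
  show ?thesis
  proof
    assume "FH_algebra sc UNIV mult one comult counit"
    then obtain f xys where f: "lin_on sc UNIV (\<lambda>r s. r * s) f"
      and F1: "\<forall>a\<in>UNIV. (\<Sum>(x, y)\<leftarrow>xys. sc (f (mult y a)) x) = a"
      and F2: "\<forall>a\<in>UNIV. (\<Sum>(x, y)\<leftarrow>xys. sc (f (mult a x)) y) = a"
      and RI: "\<forall>a\<in>UNIV. (\<Sum>(a1, a2)\<leftarrow>comult a. sc (f a1) a2) = sc (f a) one"
      unfolding FH_algebra_def by blast
    have "fhalg sc UNIV mult one comult counit f xys"
      by (rule fhalg.intro[OF E], unfold_locales) (use f F1 F2 RI in \<open>simp_all add: sw_def\<close>)
    then show "FH_algebra dual_scale (dual_carrier sc UNIV) (dual_mult UNIV comult) (dual_one UNIV counit)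
                    (dual_comult sc UNIV mult) (dual_counit one)"
      by (rule forward)
  next
    assume "FH_algebra dual_scale (dual_carrier sc UNIV) (dual_mult UNIV comult) (dual_one UNIV counit)
                    (dual_comult sc UNIV mult) (dual_counit one)"
    then obtain f xys where F: "fhalg sc UNIV mult one comult counit f xys" using backward[OF E] by blast
    interpret F: fhalg sc UNIV mult one comult counit f xys by (rule F)
    show "FH_algebra sc UNIV mult one comult counit"
      unfolding FH_algebra_def
    proof (intro conjI exI[of _ f] exI[of _ xys])
      show "bialgebra sc UNIV mult one comult counit" by (rule assms(1))
      show "fin_gen_proj sc UNIV" by (rule assms(2))
      show "lin_on sc UNIV (\<lambda>r s. r * s) f" by (rule F.f_lin)
      show "\<forall>(x, y)\<in>set xys. x \<in> UNIV \<and> y \<in> UNIV" by simp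
      show "\<forall>a\<in>UNIV. (\<Sum>(x, y)\<leftarrow>xys. sc (f (mult y a)) x) = a" using F.F1 by simp
      show "\<forall>a\<in>UNIV. (\<Sum>(x, y)\<leftarrow>xys. sc (f (mult a x)) y) = a" using F.F2 by simp
      show "\<forall>a\<in>UNIV. (\<Sum>(a1, a2)\<leftarrow>comult a. sc (f a1) a2) = sc (f a) one" using F.RI by (simp add: sw_def)
    qed
  qed
qed


end
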